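(* Let $G=(V,E)$ be a DAG, $ij\in E$, and let $G_{ij}$ be the graph obtained from $G$ by deleting the edge $ij$ and all vertices of $\mathrm{de}(j)$. If $A$ is a set of vertices of $G_{ij}$ not containing $i,j$ such that $A$ d-separates $i$ and $j$ in $G_{ij}$, then $\lambda_{ij|A\cup\{i\}}(\phi_G(\Omega,\Lambda))=\lambda_{ij}$ for all parameters $(\Omega,\Lambda)$.
   Context: $G=(V,E)$ is a DAG, edges $i\to j$ written $ij$, $\mathrm{de}(j)$ the descendants of $j$ (excluding $j$). Parameters: $\Omega=\mathrm{diag}(\omega_i)$, $\omega_i>0$; $\Lambda=(\lambda_{ij})$ with $\lambda_{ij}=0$ for $ij\notin E$. $\phi_G(\Omega,\Lambda)=(I-\Lambda)^{-T}\Omega(I-\Lambda)^{-1}$. $\Sigma_B$ principal submatrix; $\Sigma_{ij|K}$ the submatrix with rows $(i,K)$, columns $(j,K)$; $\lambda_{ij|B}(\Sigma)=|\Sigma_{ij|B\setminus\{i\}}|/|\Sigma_B|$. d-separation: $K$ d-separates $i$ and $j$ if every path between them contains a non-collider in $K$ or a collider not in $K$ with no descendant in $K$; otherwise $K$ d-connects them. *)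

theory Defs
  imports "HOL-Analysis.Analysis"
begin

text \<open>Vertices of the DAG G are the elements of a finite linearly ordered type 'n;
  the edge set is E, with (a,b) \<in> E meaning a \<rightarrow> b.\<close>

definition desc :: "('n \<times> 'n) set \<Rightarrow> 'n \<Rightarrow> 'n set" where
  "desc E v = {w. (v, w) \<in> E\<^sup>+}"

definition adj :: "('n \<times> 'n) set \<Rightarrow> 'n \<Rightarrow> 'n \<Rightarrow> bool" where
  "adj E a b \<longleftrightarrow> (a, b) \<in> E \<or> (b, a) \<in> E"

definition is_path :: "'n set \<Rightarrow> ('n \<times> 'n) set \<Rightarrow> 'n list \<Rightarrow> 'n \<Rightarrow> 'n \<Rightarrow> bool" where
  "is_path V E p i j \<longleftrightarrow> p \<noteq> [] \<and> hd p = i \<and> last p = j \<and> distinct p \<and> set p \<subseteq> V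
     \<and> (\<forall>k. k + 1 < length p \<longrightarrow> adj E (p ! k) (p ! (k + 1)))"

definition collider :: "('n \<times> 'n) set \<Rightarrow> 'n list \<Rightarrow> nat \<Rightarrow> bool" where
  "collider E p k \<longleftrightarrow> (p ! (k - 1), p ! k) \<in> E \<and> (p ! (k + 1), p ! k) \<in> E"

definition d_separates :: "'n set \<Rightarrow> ('n \<times> 'n) set \<Rightarrow> 'n set \<Rightarrow> 'n \<Rightarrow> 'n \<Rightarrow> bool" where
  "d_separates V E K i j \<longleftrightarrow>
     (\<forall>p. is_path V E p i j \<longrightarrow>
        (\<exists>k. 0 < k \<and> k + 1 < length p \<and>
           ((\<not> collider E p k \<and> p ! k \<in> K) \<or>
            (collider E p k \<and> p ! k \<notin> K \<and> desc E (p ! k) \<inter> K = {}))))"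

definition Gij_vertices :: "('n \<times> 'n) set \<Rightarrow> 'n \<Rightarrow> 'n set" where
  "Gij_vertices E j = UNIV - desc E j"

definition Gij_edges :: "('n \<times> 'n) set \<Rightarrow> 'n \<Rightarrow> 'n \<Rightarrow> ('n \<times> 'n) set" where
  "Gij_edges E i j = {(a, b). (a, b) \<in> E \<and> (a, b) \<noteq> (i, j)
      \<and> a \<in> Gij_vertices E j \<and> b \<in> Gij_vertices E j}"

definition diag_mat :: "('n::finite \<Rightarrow> real) \<Rightarrow> real^'n^'n" where
  "diag_mat \<omega> = (\<chi> a b. if a = b then \<omega> a else 0)"

definition phi :: "('n::finite \<Rightarrow> real) \<Rightarrow> real^'n^'n \<Rightarrow> real^'n^'n" where
  "phi \<omega> \<Lambda> = transpose (matrix_inv (mat 1 - \<Lambda>)) ** diag_mat \<omega> ** matrix_inv (mat 1 - \<Lambda>)"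

definition det_sub :: "real^'n^'n \<Rightarrow> ('n::finite) list \<Rightarrow> 'n list \<Rightarrow> real" where
  "det_sub M rs cs = (\<Sum>p | p permutes {..<length rs}.
      of_int (sign p) * (\<Prod>q<length rs. M $ (rs ! q) $ (cs ! (p q))))"

definition lambda_cond :: "((real, 'n::{finite,linorder}) vec, 'n) vec \<Rightarrow> 'n \<Rightarrow> 'n \<Rightarrow> 'n set \<Rightarrow> real" where
  "lambda_cond S i j B =
     det_sub S (i # sorted_list_of_set (B - {i})) (j # sorted_list_of_set (B - {i}))
     / det_sub S (sorted_list_of_set B) (sorted_list_of_set B)"

end

theory Submission
  imports Defs "Jordan_Normal_Form.Determinant"
begin


fun trip :: "('a \<Rightarrow> 'a \<Rightarrow> 'a \<Rightarrow> bool) \<Rightarrow> 'a list \<Rightarrow> bool" where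
  "trip P (a # b # c # r) = (P a b c \<and> trip P (b # c # r))"
| "trip P _ = True"

fun wk :: "('a \<times> 'a) set \<Rightarrow> 'a list \<Rightarrow> bool" where
  "wk F (a # b # r) = (adj F a b \<and> wk F (b # r))"
| "wk F _ = True"

fun dp :: "('a \<times> 'a) set \<Rightarrow> 'a list \<Rightarrow> bool" where
  "dp F (a # b # r) = ((a, b) \<in> F \<and> dp F (b # r))"
| "dp F _ = True"

lemma trip_nth: "trip P p \<longleftrightarrow> (\<forall>k. 0 < k \<longrightarrow> k + 1 < length p \<longrightarrow> P (p!(k-1)) (p!k) (p!(k+1)))"
proof (induction P p rule: trip.induct)
  case (1 P a b c r)
  show ?case
  proof
    assume H: "trip P (a # b # c # r)"
    show "\<forall>k. 0 < k \<longrightarrow> k + 1 < length (a # b # c # r) \<longrightarrow> P ((a # b # c # r)!(k-1)) ((a # b # c # r)!k) ((a # b # c # r)!(k+1))"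
    proof (intro allI impI)
      fix k assume k: "0 < k" "k + 1 < length (a # b # c # r)"
      show "P ((a # b # c # r)!(k-1)) ((a # b # c # r)!k) ((a # b # c # r)!(k+1))"
      proof (cases "k = 1")
        case True then show ?thesis using H by simp
      next
        case False
        then obtain k' where "k = Suc k'" "0 < k'" using k by (cases k) auto
        then show ?thesis using H 1 k by (auto simp: nth_Cons')
      qed
    qed
  next
    assume H: "\<forall>k. 0 < k \<longrightarrow> k + 1 < length (a # b # c # r) \<longrightarrow> P ((a # b # c # r)!(k-1)) ((a # b # c # r)!k) ((a # b # c # r)!(k+1))"
    have "P a b c" using H[rule_format, of 1] by simp
    moreover have "trip P (b # c # r)"
      unfolding 1
    proof (intro allI impI)
      fix k assume k: "0 < k" "k + 1 < length (b # c # r)"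
      show "P ((b # c # r)!(k-1)) ((b # c # r)!k) ((b # c # r)!(k+1))"
        using H[rule_format, of "Suc k"] k by (cases k) auto
    qed
    ultimately show "trip P (a # b # c # r)" by simp
  qed
qed auto

lemma wk_nth: "wk F p \<longleftrightarrow> (\<forall>k. k + 1 < length p \<longrightarrow> adj F (p!k) (p!(k+1)))"
proof (induction F p rule: wk.induct)
  case (1 F a b r)
  show ?case
  proof
    assume H: "wk F (a # b # r)"
    show "\<forall>k. k + 1 < length (a # b # r) \<longrightarrow> adj F ((a # b # r)!k) ((a # b # r)!(k+1))"
    proof (intro allI impI)
      fix k assume k: "k + 1 < length (a # b # r)"
      show "adj F ((a # b # r)!k) ((a # b # r)!(k+1))"
      proof (cases k)
        case 0 then show ?thesis using H by simp
      next
        case (Suc k') then show ?thesis using H 1 k by simp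
      qed
    qed
  next
    assume H: "\<forall>k. k + 1 < length (a # b # r) \<longrightarrow> adj F ((a # b # r)!k) ((a # b # r)!(k+1))"
    have "adj F a b" using H[rule_format, of 0] by simp
    moreover have "wk F (b # r)" unfolding 1
    proof (intro allI impI)
      fix k assume "k + 1 < length (b # r)"
      then show "adj F ((b # r)!k) ((b # r)!(k+1))" using H[rule_format, of "Suc k"] by simp
    qed
    ultimately show "wk F (a # b # r)" by simp
  qed
qed auto

lemma trip_append:
  "trip P (xs @ c # ys) \<longleftrightarrow> trip P (xs @ [c]) \<and> trip P (c # ys) \<and>
     (xs \<noteq> [] \<longrightarrow> ys \<noteq> [] \<longrightarrow> P (last xs) c (hd ys))"
proof (induction xs rule: induct_list012)
  case 1 then show ?case by simp
next
  case (2 x) then show ?case by (cases ys) auto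
next
  case (3 x y zs)
  have e1: "(x # y # zs) @ c # ys = x # y # (zs @ c # ys)" by simp
  have e2: "(x # y # zs) @ [c] = x # y # (zs @ [c])" by simp
  obtain z r where zr: "zs @ c # ys = z # r" "zs @ [c] = z # (if zs = [] then [] else tl zs @ [c])"
    by (cases zs) auto
  show ?case unfolding e1 e2 using 3 zr by (cases zs) auto
qed

lemma wk_append:
  "wk F (xs @ c # ys) \<longleftrightarrow> wk F (xs @ [c]) \<and> wk F (c # ys)"
proof (induction xs rule: induct_list012)
  case 1 then show ?case by simp
next
  case (2 x) then show ?case by (cases ys) auto
next
  case (3 x y zs)
  then show ?case by (cases zs) auto
qed

lemma dp_append:
  "dp F (xs @ c # ys) \<longleftrightarrow> dp F (xs @ [c]) \<and> dp F (c # ys)"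
proof (induction xs rule: induct_list012)
  case 1 then show ?case by simp
next
  case (2 x) then show ?case by (cases ys) auto
next
  case (3 x y zs)
  then show ?case by (cases zs) auto
qed

lemma trip_rev1:
  assumes H: "trip P p" shows "trip (\<lambda>a b c. P c b a) (rev p)"
  unfolding trip_nth
proof (intro allI impI)
  fix k assume k: "0 < k" "k + 1 < length (rev p)"
  define k' where "k' = length p - 1 - k"
  have k1: "0 < k'" "k' + 1 < length p" using k k'_def by auto
  have "P (p ! (k' - 1)) (p ! k') (p ! (k' + 1))" using H k1 unfolding trip_nth by blast
  moreover have "rev p ! (k - 1) = p ! (k'+1)" using k k'_def by (subst rev_nth) (auto intro: arg_cong[where f="(!) p"])
  moreover have "rev p ! k = p ! k'" using k k'_def by (subst rev_nth) (auto intro: arg_cong[where f="(!) p"])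
  moreover have "rev p ! (k + 1) = p ! (k'-1)" using k k'_def by (subst rev_nth) (auto intro: arg_cong[where f="(!) p"])
  ultimately show "P (rev p ! (k + 1)) (rev p ! k) (rev p ! (k - 1))" by simp
qed

lemma trip_rev: "trip P (rev p) \<longleftrightarrow> trip (\<lambda>a b c. P c b a) p"
  using trip_rev1[of P "rev p"] trip_rev1[of "\<lambda>a b c. P c b a" p] by auto

lemma adj_sym: "adj F a b = adj F b a" unfolding adj_def by auto

lemma wk_rev1:
  assumes H: "wk F p" shows "wk F (rev p)"
  unfolding wk_nth
proof (intro allI impI)
  fix k assume k: "k + 1 < length (rev p)"
  define k' where "k' = length p - 2 - k"
  have k1: "k' + 1 < length p" using k k'_def by auto
  have "adj F (p ! k') (p ! (k' + 1))" using H k1 unfolding wk_nth by blast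
  moreover have "rev p ! k = p ! (k'+1)" using k k'_def by (subst rev_nth) (auto intro: arg_cong[where f="(!) p"])
  moreover have "rev p ! (k + 1) = p ! k'" using k k'_def by (subst rev_nth) (auto intro: arg_cong[where f="(!) p"])
  ultimately show "adj F (rev p ! k) (rev p ! (k + 1))" by (simp add: adj_sym)
qed

lemma wk_rev: "wk F (rev p) \<longleftrightarrow> wk F p"
  using wk_rev1[of F "rev p"] wk_rev1[of F p] by auto

lemma trip_mono:
  assumes "trip P p" "trip Q p" "\<And>a b c. P a b c \<Longrightarrow> Q a b c \<Longrightarrow> R a b c"
  shows "trip R p"
  using assms unfolding trip_nth by blast

lemma trip_mono_set:
  assumes "trip P p" "set p \<subseteq> S" "\<And>a b c. a \<in> S \<Longrightarrow> b \<in> S \<Longrightarrow> c \<in> S \<Longrightarrow> P a b c \<Longrightarrow> Q a b c"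
  shows "trip Q p"
  using assms unfolding trip_nth
  by (metis One_nat_def Suc_lessD add.commute add_lessD1 less_imp_diff_less nth_mem plus_1_eq_Suc subset_iff)

lemma first_bad:
  "\<not> trip P p \<Longrightarrow> \<exists>xs c ys. p = xs @ c # ys \<and> xs \<noteq> [] \<and> ys \<noteq> [] \<and> trip P (xs @ [c]) \<and> \<not> P (last xs) c (hd ys)"
proof (induction P p rule: trip.induct)
  case (1 P a b c r)
  show ?case
  proof (cases "P a b c")
    case False
    then show ?thesis by (intro exI[of _ "[a]"] exI[of _ b] exI[of _ "c # r"]) auto
  next
    case True
    with 1 obtain xs c' ys where H: "b # c # r = xs @ c' # ys" "xs \<noteq> []" "ys \<noteq> []"
      "trip P (xs @ [c'])" "\<not> P (last xs) c' (hd ys)" by auto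
    have "trip P (a # xs @ [c'])"
    proof (cases xs)
      case Nil then show ?thesis using H by simp
    next
      case (Cons x xs')
      then have "x = b" using H by simp
      show ?thesis
      proof (cases xs')
        case Nil then show ?thesis using H Cons True by auto
      next
        case (Cons y xs'')
        then show ?thesis using H \<open>xs = x # xs'\<close> True by auto
      qed
    qed
    then show ?thesis using H by (intro exI[of _ "a # xs"] exI[of _ c'] exI[of _ ys]) auto
  qed
qed auto

lemma last_bad:
  assumes "\<not> trip P p"
  shows "\<exists>xs c ys. p = xs @ c # ys \<and> xs \<noteq> [] \<and> ys \<noteq> [] \<and> trip P (c # ys) \<and> \<not> P (last xs) c (hd ys)"
proof -
  have "\<not> trip (\<lambda>a b c. P c b a) (rev p)" using assms by (simp add: trip_rev)
  from first_bad[OF this] obtain xs c ys where H: "rev p = xs @ c # ys" "xs \<noteq> []" "ys \<noteq> []"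
    "trip (\<lambda>a b c. P c b a) (xs @ [c])" "\<not> P (hd ys) c (last xs)" by auto
  have "p = rev ys @ c # rev xs" using H(1) by (metis rev_append rev_rev_ident append.assoc rev.simps(2) append_Cons append_Nil)
  moreover have "trip P (c # rev xs)" using H(4) trip_rev[of "\<lambda>a b c. P c b a" "c # rev xs"] by simp
  moreover have "last (rev ys) = hd ys" "hd (rev xs) = last xs" using H by (auto simp: hd_rev last_rev)
  ultimately show ?thesis using H by (intro exI[of _ "rev ys"] exI[of _ c] exI[of _ "rev xs"]) auto
qed

section \<open>Active walks\<close>

lemma acyc2: "acyclic F \<Longrightarrow> (a, b) \<in> F \<Longrightarrow> (b, a) \<in> F \<Longrightarrow> False"
proof -
  assume "acyclic F" "(a, b) \<in> F" "(b, a) \<in> F"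
  then have "(a, a) \<in> F\<^sup>+" by (meson r_into_trancl trancl_into_trancl)
  then show False using \<open>acyclic F\<close> by (simp add: acyclic_def)
qed

definition anz :: "('a \<times> 'a) set \<Rightarrow> 'a set \<Rightarrow> 'a \<Rightarrow> bool" where
  "anz F Z x \<longleftrightarrow> x \<in> Z \<or> desc F x \<inter> Z \<noteq> {}"

definition col :: "('a \<times> 'a) set \<Rightarrow> 'a \<Rightarrow> 'a \<Rightarrow> 'a \<Rightarrow> bool" where
  "col F a b c \<longleftrightarrow> (a, b) \<in> F \<and> (c, b) \<in> F"

definition tok :: "('a \<times> 'a) set \<Rightarrow> 'a set \<Rightarrow> 'a \<Rightarrow> 'a \<Rightarrow> 'a \<Rightarrow> bool" where
  "tok F Z a b c \<longleftrightarrow> (\<not> col F a b c \<longrightarrow> b \<notin> Z) \<and> (col F a b c \<longrightarrow> anz F Z b)"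

lemma tok_sym: "tok F Z c b a = tok F Z a b c"
  unfolding tok_def col_def by auto

lemma anz_step: "(x, y) \<in> F \<Longrightarrow> anz F Z y \<Longrightarrow> anz F Z x"
  unfolding anz_def desc_def by (auto intro: trancl_into_trancl2)

lemma anz_trancl: "(x, y) \<in> F\<^sup>+ \<Longrightarrow> anz F Z y \<Longrightarrow> anz F Z x"
  unfolding anz_def desc_def by (auto intro: trancl_trans)

lemma fwd_or_col:
  assumes "wk F (x # y # r)" "trip (tok F Z) (x # y # r)" "(x, y) \<in> F"
  shows "(x, last (y # r)) \<in> F\<^sup>+ \<or> anz F Z x"
  using assms
proof (induction r arbitrary: x y)
  case Nil then show ?case by auto
next
  case (Cons z r)
  show ?case
  proof (cases "(y, z) \<in> F")
    case True
    have "(y, last (z # r)) \<in> F\<^sup>+ \<or> anz F Z y"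
      using Cons.IH[of y z] Cons.prems True by simp
    then show ?thesis using Cons.prems(3) anz_step[of x y F Z]
      by (auto intro: trancl_into_trancl2)
  next
    case False
    then have "(z, y) \<in> F" using Cons.prems(1) by (auto simp: adj_def)
    then have "col F x y z" using Cons.prems(3) by (simp add: col_def)
    then have "anz F Z y" using Cons.prems(2) by (simp add: tok_def)
    then show ?thesis using anz_step[OF Cons.prems(3)] by simp
  qed
qed




no_notation Matrix.vec_index (infixl \<open>$\<close> 100)
hide_type (open) Matrix.vec

lemma loop_cut:
  assumes acyc: "acyclic F" and w: "wk F (xs @ v # mid @ v # zs)"
    and t: "trip (tok F Z) (xs @ v # mid @ v # zs)"
  shows "wk F (xs @ v # zs) \<and> trip (tok F Z) (xs @ v # zs)"
proof -
  have w1: "wk F (xs @ [v]) \<and> wk F (v # mid @ v # zs)" using w by (rule wk_append[THEN iffD1])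
  have w2: "wk F (v # mid @ [v]) \<and> wk F (v # zs)"
    using w1 wk_append[of F "v # mid" v zs] by simp
  have t1: "trip (tok F Z) (xs @ [v]) \<and> trip (tok F Z) (v # mid @ v # zs) \<and>
     (xs \<noteq> [] \<longrightarrow> mid @ v # zs \<noteq> [] \<longrightarrow> tok F Z (last xs) v (hd (mid @ v # zs)))"
    using t by (rule trip_append[THEN iffD1])
  have t2: "trip (tok F Z) ((v # mid) @ [v]) \<and> trip (tok F Z) (v # zs) \<and>
     (v # mid \<noteq> [] \<longrightarrow> zs \<noteq> [] \<longrightarrow> tok F Z (last (v # mid)) v (hd zs))"
    using t1 by (intro trip_append[THEN iffD1]) simp
  have junc: "tok F Z (last xs) v (hd zs)" if ne: "xs \<noteq> []" "zs \<noteq> []"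
  proof -
    let ?a = "last xs" and ?c = "hd zs" and ?a1 = "hd (mid @ [v])" and ?b1 = "last (v # mid)"
    have ha1: "hd (mid @ v # zs) = ?a1" by (cases mid) auto
    have T1: "tok F Z ?a v ?a1" using t1 ne ha1 by simp
    have T2: "tok F Z ?b1 v ?c" using t2 ne by simp
    show ?thesis
    proof (cases "col F ?a v ?c")
      case False
      show ?thesis
      proof (rule ccontr)
        assume "\<not> ?thesis"
        then have "v \<in> Z" using False by (simp add: tok_def)
        then have "col F ?a v ?a1" "col F ?b1 v ?c" using T1 T2 unfolding tok_def by blast+
        then show False using False by (simp add: col_def)
      qed
    next
      case True
      show ?thesis
      proof (rule ccontr)
        assume "\<not> ?thesis"
        then have nz: "\<not> anz F Z v" using True by (simp add: tok_def)
        then have "\<not> col F ?a v ?a1" using T1 unfolding tok_def by blast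
        moreover have "(?a, v) \<in> F" using True by (simp add: col_def)
        ultimately have "(?a1, v) \<notin> F" by (simp add: col_def)
        moreover have "adj F v ?a1" using w2 by (cases mid) auto
        ultimately have e: "(v, ?a1) \<in> F" by (auto simp: adj_def)
        have "wk F (v # ?a1 # tl (mid @ [v]))" "trip (tok F Z) (v # ?a1 # tl (mid @ [v]))"
          using w2 t2 by (cases mid; simp)+
        from fwd_or_col[OF this e] have "(v, last (?a1 # tl (mid @ [v]))) \<in> F\<^sup>+ \<or> anz F Z v" .
        moreover have "last (?a1 # tl (mid @ [v])) = v" by (cases mid) auto
        ultimately have "(v, v) \<in> F\<^sup>+ \<or> anz F Z v" by simp
        then show False using nz acyc by (simp add: acyclic_def)
      qed
    qed
  qed
  have "wk F (xs @ v # zs)" using w1 w2 wk_append[of F xs v zs] by simp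
  moreover have "trip (tok F Z) (xs @ v # zs)"
    using t1 t2 junc by (intro trip_append[THEN iffD2]) auto
  ultimately show ?thesis by blast
qed


lemma walk_to_path:
  assumes acyc: "acyclic F"
  shows "wk F p \<Longrightarrow> trip (tok F Z) p \<Longrightarrow> p \<noteq> [] \<Longrightarrow>
    \<exists>q. distinct q \<and> q \<noteq> [] \<and> hd q = hd p \<and> last q = last p \<and> set q \<subseteq> set p \<and> wk F q \<and> trip (tok F Z) q"
proof (induction "length p" arbitrary: p rule: less_induct)
  case less
  show ?case
  proof (cases "distinct p")
    case True then show ?thesis using less.prems by blast
  next
    case False
    then obtain xs v mid zs where p: "p = xs @ [v] @ mid @ [v] @ zs"
      using not_distinct_decomp by blast
    let ?p' = "xs @ v # zs"
    have "wk F ?p' \<and> trip (tok F Z) ?p'" using loop_cut[OF acyc, of xs v mid zs Z] less.prems p by simp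
    moreover have "length ?p' < length p" using p by simp
    ultimately obtain q where q: "distinct q" "q \<noteq> []" "hd q = hd ?p'" "last q = last ?p'" "set q \<subseteq> set ?p'"
      "wk F q" "trip (tok F Z) q" using less.hyps[of ?p'] by auto
    have "hd ?p' = hd p" "last ?p' = last p" "set ?p' \<subseteq> set p" using p by (cases xs; cases zs; auto)+
    then show ?thesis using q by auto
  qed
qed

lemma dsep_no_active:
  assumes ds: "d_separates V F Z i j" and acyc: "acyclic F"
    and p: "wk F p" "trip (tok F Z) p" "p \<noteq> []" "hd p = i" "last p = j" "set p \<subseteq> V"
  shows False
proof -
  obtain q where q: "distinct q" "q \<noteq> []" "hd q = i" "last q = j" "set q \<subseteq> V" "wk F q" "trip (tok F Z) q"
    using walk_to_path[OF acyc p(1,2,3)] p by auto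
  have "is_path V F q i j" unfolding is_path_def using q wk_nth[of F q] by auto
  then obtain k where k: "0 < k" "k + 1 < length q"
    "(\<not> collider F q k \<and> q ! k \<in> Z) \<or> (collider F q k \<and> q ! k \<notin> Z \<and> desc F (q ! k) \<inter> Z = {})"
    using ds unfolding d_separates_def by blast
  have "tok F Z (q!(k-1)) (q!k) (q!(k+1))" using q(7) k(1,2) unfolding trip_nth by blast
  then show False using k(3) unfolding tok_def col_def collider_def anz_def by auto
qed

lemma dp_trancl: "(c, t) \<in> F\<^sup>+ \<Longrightarrow> \<exists>q. dp F (c # q) \<and> q \<noteq> [] \<and> last q = t"
proof (induction rule: converse_trancl_induct)
  case (base y) then show ?case by (intro exI[of _ "[t]"]) auto
next
  case (step y z)
  then obtain q where "dp F (z # q)" "q \<noteq> []" "last q = t" by auto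
  then show ?case using step by (intro exI[of _ "z # q"]) auto
qed

lemma dp_wk: "dp F p \<Longrightarrow> wk F p"
  by (induction F p rule: dp.induct) (auto simp: adj_def)

lemma dp_desc: "dp F (c # q) \<Longrightarrow> x \<in> set q \<Longrightarrow> (c, x) \<in> F\<^sup>+"
proof (induction q arbitrary: c)
  case Nil then show ?case by simp
next
  case (Cons y q)
  then have "(c, y) \<in> F" "dp F (y # q)" by auto
  then show ?case using Cons by (auto intro: trancl_into_trancl2)
qed

lemma dp_set: "dp F (c # q) \<Longrightarrow> F \<subseteq> V \<times> V \<Longrightarrow> set q \<subseteq> V"
  by (induction q arbitrary: c) auto

lemma dp_tok:
  assumes "acyclic F" "dp F (c # q)" "\<not> anz F Z c"
  shows "trip (tok F Z) (c # q)"
proof -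
  have nz: "x \<notin> Z" if "x \<in> set q" for x
    using assms(3) dp_desc[OF assms(2) that] unfolding anz_def desc_def by auto
  have "trip (tok F Z) p" if "dp F p" "\<forall>x \<in> set (tl p). x \<notin> Z" for p
    using that
  proof (induction "tok F Z" p rule: trip.induct)
    case (1 a b c r)
    have "(a, b) \<in> F" "(b, c) \<in> F" using 1 by auto
    then have "\<not> col F a b c" using acyc2[OF assms(1)] unfolding col_def by blast
    then have "tok F Z a b c" using 1 by (simp add: tok_def)
    then show ?case using 1 by simp
  qed auto
  then show ?thesis using assms(2) nz by simp
qed

lemma dp_junc:
  assumes "acyclic F" "(c, d) \<in> F" "c \<notin> Z"
  shows "tok F Z a c d"
  using assms acyc2[OF assms(1)] unfolding tok_def col_def by blast

definition reach :: "('a \<times> 'a) set \<Rightarrow> 'a \<Rightarrow> 'a \<Rightarrow> bool" where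
  "reach F b y \<longleftrightarrow> b = y \<or> (b, y) \<in> F\<^sup>+"

definition pre2 :: "('a \<times> 'a) set \<Rightarrow> 'a set \<Rightarrow> 'a \<Rightarrow> 'a \<Rightarrow> 'a \<Rightarrow> 'a \<Rightarrow> bool" where
  "pre2 F Z y a b c \<longleftrightarrow> (\<not> col F a b c \<longrightarrow> b \<notin> Z) \<and> (col F a b c \<longrightarrow> anz F Z b \<or> reach F b y)"

definition pre1 :: "('a \<times> 'a) set \<Rightarrow> 'a set \<Rightarrow> 'a \<Rightarrow> 'a \<Rightarrow> 'a \<Rightarrow> 'a \<Rightarrow> 'a \<Rightarrow> bool" where
  "pre1 F Z x y a b c \<longleftrightarrow> (\<not> col F a b c \<longrightarrow> b \<notin> Z) \<and>
     (col F a b c \<longrightarrow> anz F Z b \<or> reach F b x \<or> reach F b y)"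

lemma tok_flip: "(\<lambda>a b c. tok F Z c b a) = tok F Z"
  by (intro ext) (simp add: tok_sym)

lemma tok_pre2: "tok F Z a b c \<Longrightarrow> pre2 F Z y a b c"
  unfolding tok_def pre2_def by auto

lemma phase2:
  assumes acyc: "acyclic F" and FV: "F \<subseteq> V \<times> V" and p: "wk F p" "p \<noteq> []" "last p = y" "set p \<subseteq> V"
    and tp: "trip (pre2 F Z y) p"
  shows "\<exists>q. wk F q \<and> q \<noteq> [] \<and> hd q = hd p \<and> last q = y \<and> set q \<subseteq> V \<and> trip (tok F Z) q"
proof (cases "trip (tok F Z) p")
  case True then show ?thesis using p by blast
next
  case False
  from first_bad[OF False] obtain xs c ys where d: "p = xs @ c # ys" "xs \<noteq> []" "ys \<noteq> []"
    "trip (tok F Z) (xs @ [c])" "\<not> tok F Z (last xs) c (hd ys)" by blast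
  have "pre2 F Z y (last xs) c (hd ys)" using tp d(1-3) trip_append[of "pre2 F Z y" xs c ys] by simp
  then have cc: "col F (last xs) c (hd ys)" "\<not> anz F Z c" "reach F c y"
    using d(5) unfolding pre2_def tok_def by auto
  have wxs: "wk F (xs @ [c])" using p(1) d(1) wk_append[of F xs c ys] by simp
  have hxs: "hd (xs @ [c]) = hd p" using d by simp
  show ?thesis
  proof (cases "c = y")
    case True
    then show ?thesis using wxs d p(4) hxs by (intro exI[of _ "xs @ [c]"]) auto
  next
    case False
    then have "(c, y) \<in> F\<^sup>+" using cc(3) by (simp add: reach_def)
    from dp_trancl[OF this] obtain q' where q': "dp F (c # q')" "q' \<noteq> []" "last q' = y" by blast
    have "wk F (xs @ c # q')" using wxs dp_wk[OF q'(1)] wk_append[of F xs c q'] by simp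
    moreover have "c \<notin> Z" using cc(2) by (simp add: anz_def)
    moreover have "(c, hd q') \<in> F" using q'(1,2) by (cases q') auto
    ultimately have "trip (tok F Z) (xs @ c # q')"
      using d(4) dp_tok[OF acyc q'(1) cc(2)] dp_junc[OF acyc, of c "hd q'" Z "last xs"]
      by (intro trip_append[THEN iffD2]) auto
    moreover have "set q' \<subseteq> V" using dp_set[OF q'(1) FV] .
    ultimately show ?thesis using \<open>wk F (xs @ c # q')\<close> d p(4) q'
      by (intro exI[of _ "xs @ c # q'"]) auto
  qed
qed

lemma phase1:
  assumes acyc: "acyclic F" and FV: "F \<subseteq> V \<times> V" and p: "wk F p" "p \<noteq> []" "hd p = x" "last p = y" "set p \<subseteq> V"
    and tp: "trip (pre1 F Z x y) p"
  shows "\<exists>q. wk F q \<and> q \<noteq> [] \<and> hd q = x \<and> last q = y \<and> set q \<subseteq> V \<and> trip (pre2 F Z y) q"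
proof -
  define P1 where "P1 = (\<lambda>a b c. \<not> (col F a b c \<and> \<not> anz F Z b \<and> reach F b x))"
  have m: "pre2 F Z y a b c" if "pre1 F Z x y a b c" "P1 a b c" for a b c
    using that unfolding P1_def pre1_def pre2_def by auto
  show ?thesis
  proof (cases "trip P1 p")
    case True
    then have "trip (pre2 F Z y) p" using tp m trip_mono by blast
    then show ?thesis using p by blast
  next
    case False
    from last_bad[OF False] obtain xs c ys where d: "p = xs @ c # ys" "xs \<noteq> []" "ys \<noteq> []"
      "trip P1 (c # ys)" "\<not> P1 (last xs) c (hd ys)" by blast
    then have cc: "col F (last xs) c (hd ys)" "\<not> anz F Z c" "reach F c x"
      unfolding P1_def by auto
    have wys: "wk F (c # ys)" using p(1) d(1) wk_append[of F xs c ys] by simp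
    have tys: "trip (pre1 F Z x y) (c # ys)" using tp d(1) trip_append[of _ xs c ys] by simp
    have tys2: "trip (pre2 F Z y) (c # ys)" using tys d(4) m trip_mono by blast
    have lys: "last (c # ys) = y" using d p(4) by simp
    have sys: "set (c # ys) \<subseteq> V" using d p(5) by auto
    show ?thesis
    proof (cases "c = x")
      case True
      then show ?thesis using wys tys2 lys sys by (intro exI[of _ "c # ys"]) auto
    next
      case False
      then have "(c, x) \<in> F\<^sup>+" using cc(3) by (simp add: reach_def)
      from dp_trancl[OF this] obtain q' where q': "dp F (c # q')" "q' \<noteq> []" "last q' = x" by blast
      have e1: "rev (c # q') = rev q' @ [c]" by simp
      have "wk F (rev q' @ [c])" using wk_rev[of F "c # q'"] dp_wk[OF q'(1)] e1 by simp
      then have W: "wk F (rev q' @ c # ys)" using wys wk_append[of F "rev q'" c ys] by simp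
      have "trip (tok F Z) (rev (c # q'))" using trip_rev[of "tok F Z" "c # q'"] dp_tok[OF acyc q'(1) cc(2)]
        by (simp add: tok_flip)
      then have t1: "trip (pre2 F Z y) (rev q' @ [c])" using e1 trip_mono[of "tok F Z" _ "tok F Z" "pre2 F Z y"] tok_pre2
        by metis
      have "c \<notin> Z" using cc(2) by (simp add: anz_def)
      moreover have "(c, hd q') \<in> F" using q'(1,2) by (cases q') auto
      ultimately have "tok F Z (hd ys) c (hd q')" using dp_junc[OF acyc] by blast
      then have "pre2 F Z y (last (rev q')) c (hd ys)" using q'(2) tok_sym tok_pre2
        by (metis last_rev)
      then have T: "trip (pre2 F Z y) (rev q' @ c # ys)" using t1 tys2
        by (intro trip_append[THEN iffD2]) auto
      have "set q' \<subseteq> V" using dp_set[OF q'(1) FV] .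
      then show ?thesis using W T q' d lys sys
        by (intro exI[of _ "rev q' @ c # ys"]) (auto simp: hd_rev)
    qed
  qed
qed

section \<open>The ancestral set W and its moral component\<close>

definition Wset :: "('n \<times> 'n) set \<Rightarrow> 'n \<Rightarrow> 'n \<Rightarrow> 'n set \<Rightarrow> 'n set" where
  "Wset E i j A = {x. \<exists>t. (t = i \<or> t \<in> A \<or> ((t, j) \<in> E \<and> t \<noteq> i)) \<and> (x = t \<or> (x, t) \<in> E\<^sup>+)}"

definition madj :: "('n \<times> 'n) set \<Rightarrow> 'n set \<Rightarrow> 'n \<Rightarrow> 'n \<Rightarrow> bool" where
  "madj E W a b \<longleftrightarrow> a \<in> W \<and> b \<in> W \<and> a \<noteq> b \<and>
     ((a, b) \<in> E \<or> (b, a) \<in> E \<or> (\<exists>w\<in>W. (a, w) \<in> E \<and> (b, w) \<in> E))"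

inductive_set comp :: "('n \<times> 'n) set \<Rightarrow> 'n set \<Rightarrow> 'n set \<Rightarrow> 'n \<Rightarrow> 'n set"
  for E W A i where
  base: "i \<in> W \<Longrightarrow> i \<notin> A \<Longrightarrow> i \<in> comp E W A i"
| step: "c \<in> comp E W A i \<Longrightarrow> v \<in> W \<Longrightarrow> v \<notin> A \<Longrightarrow> madj E W c v \<Longrightarrow> v \<in> comp E W A i"

lemma comp_sub: "v \<in> comp E W A i \<Longrightarrow> v \<in> W \<and> v \<notin> A"
  by (induction rule: comp.induct) auto

lemma W_anc: "(x, w) \<in> E \<Longrightarrow> w \<in> Wset E i j A \<Longrightarrow> x \<in> Wset E i j A"
  unfolding Wset_def by (auto intro: trancl_into_trancl2)

lemma W_anc_trancl: "(x, w) \<in> E\<^sup>+ \<Longrightarrow> w \<in> Wset E i j A \<Longrightarrow> x \<in> Wset E i j A"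
  by (induction rule: converse_trancl_induct) (auto intro: W_anc)

locale G =
  fixes E :: "('n \<times> 'n) set" and i j :: 'n and A :: "'n set"
  assumes dag: "acyclic E"
    and edge: "(i, j) \<in> E"
    and A_sub: "A \<subseteq> Gij_vertices E j"
    and i_notin: "i \<notin> A" and j_notin: "j \<notin> A"
begin

abbreviation "V' \<equiv> Gij_vertices E j"
abbreviation "F \<equiv> Gij_edges E i j"
abbreviation "W \<equiv> Wset E i j A"

lemma V'_iff: "x \<in> V' \<longleftrightarrow> (j, x) \<notin> E\<^sup>+"
  unfolding Gij_vertices_def desc_def by auto

lemma F_sub: "F \<subseteq> E" unfolding Gij_edges_def by auto
lemma acycF: "acyclic F" using acyclic_subset[OF dag F_sub] .
lemma FV: "F \<subseteq> V' \<times> V'" unfolding Gij_edges_def by auto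

lemma j_V': "j \<in> V'" using dag V'_iff by (auto simp: acyclic_def)
lemma i_V': "i \<in> V'"
proof -
  have "(j, i) \<notin> E\<^sup>+"
  proof
    assume "(j, i) \<in> E\<^sup>+"
    then have "(j, j) \<in> E\<^sup>+" using edge by (auto intro: trancl_into_trancl)
    then show False using dag by (simp add: acyclic_def)
  qed
  then show ?thesis using V'_iff by simp
qed
lemma ij: "i \<noteq> j" using edge dag by (auto simp: acyclic_def)

lemma nd_closed: "(x, t) \<in> E\<^sup>+ \<Longrightarrow> t \<in> V' \<Longrightarrow> t \<noteq> j \<Longrightarrow> x \<in> V' \<and> x \<noteq> j"
proof -
  assume a: "(x, t) \<in> E\<^sup>+" "t \<in> V'" "t \<noteq> j"
  have "(j, t) \<notin> E\<^sup>+" using a(2) V'_iff by simp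
  moreover have "(j, x) \<in> E\<^sup>+ \<Longrightarrow> (j, t) \<in> E\<^sup>+" using a(1) by (meson trancl_trans)
  ultimately show ?thesis using V'_iff a(1) by blast
qed

lemma par_V': "(u, j) \<in> E \<Longrightarrow> u \<in> V' \<and> u \<noteq> j"
proof -
  assume e: "(u, j) \<in> E"
  have "(j, u) \<notin> E\<^sup>+"
  proof
    assume "(j, u) \<in> E\<^sup>+"
    then have "(j, j) \<in> E\<^sup>+" using e by (auto intro: trancl_into_trancl)
    then show False using dag by (simp add: acyclic_def)
  qed
  moreover have "u \<noteq> j" using e dag by (auto simp: acyclic_def)
  ultimately show ?thesis using V'_iff by simp
qed

lemma targets: "t = i \<or> t \<in> A \<or> ((t, j) \<in> E \<and> t \<noteq> i) \<Longrightarrow> t \<in> V' \<and> t \<noteq> j"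
proof -
  assume "t = i \<or> t \<in> A \<or> ((t, j) \<in> E \<and> t \<noteq> i)"
  then consider "t = i" | "t \<in> A" | "(t, j) \<in> E" by blast
  then show ?thesis
  proof cases
    case 1 then show ?thesis using i_V' ij by simp
  next
    case 2 then show ?thesis using A_sub j_notin by blast
  next
    case 3 then show ?thesis using par_V' by blast
  qed
qed

lemma W_sub: "x \<in> W \<Longrightarrow> x \<in> V' \<and> x \<noteq> j"
proof -
  assume "x \<in> W"
  then obtain t where t: "t = i \<or> t \<in> A \<or> ((t, j) \<in> E \<and> t \<noteq> i)" "x = t \<or> (x, t) \<in> E\<^sup>+"
    unfolding Wset_def by blast
  have tv: "t \<in> V' \<and> t \<noteq> j" using targets[OF t(1)] .
  show ?thesis using t(2) tv nd_closed[of x t] by blast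
qed

lemma E_to_F: "(a, b) \<in> E \<Longrightarrow> a \<in> W \<Longrightarrow> b \<in> W \<Longrightarrow> (a, b) \<in> F"
proof -
  assume a: "(a, b) \<in> E" "a \<in> W" "b \<in> W"
  have "a \<in> V'" "b \<in> V'" "b \<noteq> j" using W_sub[OF a(2)] W_sub[OF a(3)] by auto
  then show ?thesis using a(1) unfolding Gij_edges_def by simp
qed

lemma trancl_EF: "(c, t) \<in> E\<^sup>+ \<Longrightarrow> t \<in> V' \<Longrightarrow> t \<noteq> j \<Longrightarrow> (c, t) \<in> F\<^sup>+"
proof (induction rule: converse_trancl_induct)
  case (base y)
  have "(y, t) \<in> E\<^sup>+" using base(1) by (rule r_into_trancl)
  then have "y \<in> V' \<and> y \<noteq> j" using base(2,3) nd_closed by simp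
  then have "(y, t) \<in> F" using base unfolding Gij_edges_def by simp
  then show ?case by (rule r_into_trancl)
next
  case (step y z)
  have zt: "(z, t) \<in> F\<^sup>+" using step(3,4,5) by simp
  have "z \<in> V' \<and> z \<noteq> j" using step(2,4,5) nd_closed by simp
  moreover have "(y, t) \<in> E\<^sup>+" using step(1,2) by (rule trancl_into_trancl2)
  then have "y \<in> V' \<and> y \<noteq> j" using step(4,5) nd_closed by simp
  ultimately have "(y, z) \<in> F" using step(1) unfolding Gij_edges_def by simp
  then show ?case using zt by (rule trancl_into_trancl2)
qed

lemma W_class: "x \<in> W \<Longrightarrow> anz F A x \<or> reach F x i \<or> reach F x j"
proof -
  assume "x \<in> W"
  then obtain t where t: "t = i \<or> t \<in> A \<or> ((t, j) \<in> E \<and> t \<noteq> i)" "x = t \<or> (x, t) \<in> E\<^sup>+"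
    unfolding Wset_def by blast
  have tv: "t \<in> V' \<and> t \<noteq> j" using targets[OF t(1)] .
  have rt: "x = t \<or> (x, t) \<in> F\<^sup>+"
  proof (cases "x = t")
    case False
    then have "(x, t) \<in> E\<^sup>+" using t(2) by simp
    then show ?thesis using trancl_EF tv by simp
  qed simp
  show ?thesis
  proof (cases "t = i")
    case True then show ?thesis using rt unfolding reach_def by simp
  next
    case False
    show ?thesis
    proof (cases "t \<in> A")
      case True
      then show ?thesis using rt unfolding anz_def desc_def by blast
    next
      case False
      then have "(t, j) \<in> E" "t \<noteq> i" using t(1) \<open>t \<noteq> i\<close> by auto
      then have tj: "(t, j) \<in> F" using tv j_V' unfolding Gij_edges_def by simp
      have "(x, j) \<in> F\<^sup>+"
      proof (cases "x = t")
        case True then show ?thesis using tj by simp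
      next
        case False then have "(x, t) \<in> F\<^sup>+" using rt by simp
        then show ?thesis using tj by (rule trancl_into_trancl)
      qed
      then show ?thesis unfolding reach_def by simp
    qed
  qed
qed

definition pre0 :: "'n \<Rightarrow> 'n \<Rightarrow> 'n \<Rightarrow> bool" where
  "pre0 a b c \<longleftrightarrow> (\<not> col F a b c \<longrightarrow> b \<notin> A)"

end

lemma snoc_trip: "trip P p \<Longrightarrow> p \<noteq> [] \<Longrightarrow> (butlast p \<noteq> [] \<Longrightarrow> P (last (butlast p)) (last p) x) \<Longrightarrow> trip P (p @ [x])"
proof -
  assume a: "trip P p" "p \<noteq> []" "butlast p \<noteq> [] \<Longrightarrow> P (last (butlast p)) (last p) x"
  have e: "p = butlast p @ [last p]" using a(2) by simp
  have "trip P (butlast p @ [last p])" using a(1) e by simp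
  then have "trip P (butlast p @ last p # [x])"
    using a(3) by (intro trip_append[THEN iffD2]) simp
  then show ?thesis using e by (metis append.assoc append_Cons append_Nil)
qed

lemma snoc_wk: "wk F' p \<Longrightarrow> p \<noteq> [] \<Longrightarrow> adj F' (last p) x \<Longrightarrow> wk F' (p @ [x])"
proof -
  assume a: "wk F' p" "p \<noteq> []" "adj F' (last p) x"
  have e: "p = butlast p @ [last p]" using a(2) by simp
  have "wk F' (butlast p @ [last p])" using a(1) e by simp
  then have "wk F' (butlast p @ last p # [x])"
    using a(3) by (intro wk_append[THEN iffD2]) simp
  then show ?thesis using e by (metis append.assoc append_Cons append_Nil)
qed

context G begin

lemma comp_walk: "v \<in> comp E W A i \<Longrightarrow>
  \<exists>p. wk F p \<and> set p \<subseteq> W \<and> p \<noteq> [] \<and> hd p = i \<and> last p = v \<and> trip pre0 p"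
proof (induction rule: comp.induct)
  case base then show ?case by (intro exI[of _ "[i]"]) simp
next
  case (step c v)
  then obtain p where p: "wk F p" "set p \<subseteq> W" "p \<noteq> []" "hd p = i" "last p = c" "trip pre0 p" by blast
  have cW: "c \<in> W" "c \<notin> A" using comp_sub[OF step(1)] by auto
  have pc: "pre0 a c x" for a x using cW unfolding pre0_def by simp
  from step(4) have m: "(c, v) \<in> E \<or> (v, c) \<in> E \<or> (\<exists>w\<in>W. (c, w) \<in> E \<and> (v, w) \<in> E)"
    unfolding madj_def by simp
  show ?case
  proof (cases "(c, v) \<in> E \<or> (v, c) \<in> E")
    case True
    then have "adj F c v" using E_to_F cW step(2) unfolding adj_def by blast
    then have "wk F (p @ [v])" using snoc_wk[OF p(1) p(3)] p(5) by simp
    moreover have "trip pre0 (p @ [v])" using snoc_trip[OF p(6) p(3)] pc p(5) by simp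
    ultimately show ?thesis using p step(2)
      by (intro exI[of _ "p @ [v]"]) simp
  next
    case False
    then obtain w where w: "w \<in> W" "(c, w) \<in> E" "(v, w) \<in> E" using m by blast
    have f: "(c, w) \<in> F" "(v, w) \<in> F" using w E_to_F cW step(2) by auto
    have w1: "wk F (p @ [w])" using snoc_wk[OF p(1) p(3)] f p(5) by (simp add: adj_def)
    have t1: "trip pre0 (p @ [w])" using snoc_trip[OF p(6) p(3)] pc p(5) by simp
    have w2: "wk F ((p @ [w]) @ [v])" using snoc_wk[OF w1] f by (simp add: adj_def)
    have "last (butlast (p @ [w])) = c" using p(3,5) by simp
    moreover have "col F c w v" using f by (simp add: col_def)
    ultimately have t2: "trip pre0 ((p @ [w]) @ [v])"
      using snoc_trip[OF t1] by (simp add: pre0_def)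
    show ?thesis using w2 t2 p step(2) w(1)
      by (intro exI[of _ "p @ [w, v]"]) simp
  qed
qed

end

context G begin

lemma P3:
  assumes dsep: "d_separates V' F A i j"
    and u: "u \<in> comp E W A i" "(u, j) \<in> E" "u \<noteq> i"
  shows False
proof -
  obtain p where p: "wk F p" "set p \<subseteq> W" "p \<noteq> []" "hd p = i" "last p = u" "trip pre0 p"
    using comp_walk[OF u(1)] by blast
  have uW: "u \<in> W" "u \<notin> A" using comp_sub[OF u(1)] by auto
  have "u \<in> V'" using W_sub[OF uW(1)] by simp
  then have uj: "(u, j) \<in> F" using u(2,3) j_V' unfolding Gij_edges_def by simp
  have w: "wk F (p @ [j])" using snoc_wk[OF p(1) p(3)] uj p(5) by (simp add: adj_def)
  have t0: "trip pre0 (p @ [j])" using snoc_trip[OF p(6) p(3)] uW(2) p(5) by (simp add: pre0_def)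
  have sW: "set (p @ [j]) \<subseteq> W \<union> {j}" using p(2) by auto
  have t1: "trip (pre1 F A i j) (p @ [j])"
  proof (rule trip_mono_set[OF t0 sW])
    fix a b c assume b: "b \<in> W \<union> {j}" and "pre0 a b c"
    then have "\<not> col F a b c \<longrightarrow> b \<notin> A" by (simp add: pre0_def)
    moreover have "anz F A b \<or> reach F b i \<or> reach F b j"
    proof (cases "b = j")
      case True then show ?thesis by (simp add: reach_def)
    next
      case False then show ?thesis using b W_class by simp
    qed
    ultimately show "pre1 F A i j a b c" unfolding pre1_def by blast
  qed
  have sV: "set (p @ [j]) \<subseteq> V'" using sW W_sub j_V' by blast
  obtain q where q: "wk F q" "q \<noteq> []" "hd q = i" "last q = j" "set q \<subseteq> V'" "trip (pre2 F A j) q"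
    using phase1[OF acycF FV w _ _ _ sV t1] p(3,4) by auto
  obtain q2 where q2: "wk F q2" "q2 \<noteq> []" "hd q2 = i" "last q2 = j" "set q2 \<subseteq> V'" "trip (tok F A) q2"
    using phase2[OF acycF FV q(1,2,4,5,6)] q(3) by auto
  show False using dsep_no_active[OF dsep acycF q2(1,6,2,3,4,5)] .
qed

end

section \<open>Algebra of the model\<close>

locale Mdl = G E i j A for E :: "('n::{finite,linorder} \<times> 'n) set" and i j A +
  fixes \<omega> :: "'n \<Rightarrow> real" and \<Lambda> :: "real^'n::{finite,linorder}^'n::{finite,linorder}"
  assumes pos: "\<And>v. \<omega> v > 0"
    and zero: "\<And>a b. (a, b) \<notin> E \<Longrightarrow> \<Lambda> $ a $ b = 0"
begin

definition "L = Finite_Cartesian_Product.mat 1 - \<Lambda>"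
definition "N = matrix_inv L"
definition "S = phi \<omega> \<Lambda>"

lemma L_entry: "L $ a $ b = (if a = b then 1 else 0) - \<Lambda> $ a $ b"
  unfolding L_def by (simp add: Finite_Cartesian_Product.mat_def)

lemma Lam_nz: "\<Lambda> $ a $ b \<noteq> 0 \<Longrightarrow> (a, b) \<in> E"
  using zero by blast

lemma wfE: "wf (E\<inverse>)"
  by (rule finite_acyclic_wf_converse[OF _ dag]) simp

lemma delta_l: "(\<Sum>u\<in>UNIV. (if w = u then 1 else 0) * f u) = (f (w :: 'n) :: real)"
proof -
  have "(\<Sum>u\<in>UNIV. (if w = u then 1 else 0) * f u) = (\<Sum>u\<in>UNIV. if w = u then f u else 0)"
    by (rule sum.cong) auto
  also have "\<dots> = f w" by (rule trans[OF sum.delta']) simp_all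
  finally show ?thesis .
qed

lemma delta_r: "(\<Sum>u\<in>UNIV. f u * (if u = w then 1 else 0)) = (f (w :: 'n) :: real)"
proof -
  have "(\<Sum>u\<in>UNIV. f u * (if u = w then 1 else 0)) = (\<Sum>u\<in>UNIV. (if w = u then 1 else 0) * f u)"
    by (rule sum.cong) auto
  then show ?thesis using delta_l by simp
qed

lemma L_sum_l: "(\<Sum>u\<in>UNIV. L $ w $ u * f u) = f w - (\<Sum>u\<in>UNIV. \<Lambda> $ w $ u * f u)"
proof -
  have "(\<Sum>u\<in>UNIV. L $ w $ u * f u) = (\<Sum>u\<in>UNIV. (if w = u then 1 else 0) * f u - \<Lambda> $ w $ u * f u)"
    by (simp add: L_entry left_diff_distrib)
  also have "\<dots> = f w - (\<Sum>u\<in>UNIV. \<Lambda> $ w $ u * f u)" by (simp add: sum_subtractf delta_l)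
  finally show ?thesis .
qed

lemma L_sum_r: "(\<Sum>u\<in>UNIV. f u * L $ u $ w) = f w - (\<Sum>u\<in>UNIV. f u * \<Lambda> $ u $ w)"
proof -
  have "(\<Sum>u\<in>UNIV. f u * L $ u $ w) = (\<Sum>u\<in>UNIV. f u * (if u = w then 1 else 0) - f u * \<Lambda> $ u $ w)"
    by (simp add: L_entry right_diff_distrib)
  also have "\<dots> = f w - (\<Sum>u\<in>UNIV. f u * \<Lambda> $ u $ w)" by (simp add: sum_subtractf delta_r)
  finally show ?thesis .
qed

lemma L_inj: "L *v x = 0 \<Longrightarrow> x = 0"
proof -
  assume H: "L *v x = 0"
  have eq: "x $ w = (\<Sum>u\<in>UNIV. \<Lambda> $ w $ u * x $ u)" for w
  proof -
    have "(L *v x) $ w = 0" using H by simp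
    then have "(\<Sum>u\<in>UNIV. L $ w $ u * x $ u) = 0" by (simp add: matrix_vector_mult_def)
    then show ?thesis using L_sum_l[of w "\<lambda>u. x $ u"] by simp
  qed
  have xz: "x $ w = 0" for w
  proof (induction w rule: wf_induct[OF wfE])
    case (1 w)
    have z: "\<Lambda> $ w $ u * x $ u = 0" for u
    proof (cases "\<Lambda> $ w $ u = 0")
      case False
      then have "(u, w) \<in> E\<inverse>" using Lam_nz by simp
      then show ?thesis using 1 by simp
    qed simp
    have "(\<Sum>u\<in>UNIV. \<Lambda> $ w $ u * x $ u) = 0" by (rule sum.neutral) (use z in blast)
    then show ?case using eq[of w] by simp
  qed
  show "x = 0"
  proof (rule Finite_Cartesian_Product.vec_eq_iff[THEN iffD2], rule allI)
    fix w show "x $ w = 0 $ w" using xz[of w] by simp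
  qed
qed

lemma L_invertible: "invertible L"
  using L_inj matrix_left_invertible_ker invertible_left_inverse by blast

lemma NL: "N ** L = Finite_Cartesian_Product.mat 1" and LN: "L ** N = Finite_Cartesian_Product.mat 1"
proof -
  have "\<exists>A'. L ** A' = Finite_Cartesian_Product.mat 1 \<and> A' ** L = Finite_Cartesian_Product.mat 1"
    using L_invertible unfolding invertible_def by blast
  then have "L ** N = Finite_Cartesian_Product.mat 1 \<and> N ** L = Finite_Cartesian_Product.mat 1"
    unfolding N_def matrix_inv_def by (rule someI_ex)
  then show "N ** L = Finite_Cartesian_Product.mat 1" "L ** N = Finite_Cartesian_Product.mat 1" by auto
qed

lemma F1: "(\<Sum>w\<in>UNIV. L $ c $ w * N $ w $ u) = (if c = u then 1 else 0)"
proof -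
  have "(L ** N) $ c $ u = (if c = u then 1 else 0)" using LN by (simp add: Finite_Cartesian_Product.mat_def)
  then show ?thesis by (simp add: matrix_matrix_mult_def)
qed

lemma F2: "(\<Sum>x\<in>UNIV. N $ w $ x * L $ x $ u) = (if w = u then 1 else 0)"
proof -
  have "(N ** L) $ w $ u = (if w = u then 1 else 0)" using NL by (simp add: Finite_Cartesian_Product.mat_def)
  then show ?thesis by (simp add: matrix_matrix_mult_def)
qed

lemma N_rec: "N $ w $ u = (if w = u then 1 else 0) + (\<Sum>x\<in>UNIV. \<Lambda> $ w $ x * N $ x $ u)"
  using F1[of w u] L_sum_l[of w "\<lambda>x. N $ x $ u"] by simp

lemma N_rec2: "N $ w $ u = (if w = u then 1 else 0) + (\<Sum>x\<in>UNIV. N $ w $ x * \<Lambda> $ x $ u)"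
  using F2[of w u] L_sum_r[of "\<lambda>x. N $ w $ x" u] by simp

lemma N_supp: "N $ w $ u \<noteq> 0 \<Longrightarrow> w = u \<or> (w, u) \<in> E\<^sup>+"
proof -
  have "w \<noteq> u \<longrightarrow> (w, u) \<notin> E\<^sup>+ \<longrightarrow> N $ w $ u = 0"
  proof (induction w rule: wf_induct[OF wfE])
    case (1 w)
    show ?case
    proof (intro impI)
      assume a: "w \<noteq> u" "(w, u) \<notin> E\<^sup>+"
      have z: "\<Lambda> $ w $ x * N $ x $ u = 0" for x
      proof (cases "\<Lambda> $ w $ x = 0")
        case False
        then have e: "(w, x) \<in> E" using Lam_nz by simp
        then have "x \<noteq> u" using a by auto
        moreover have "(x, u) \<notin> E\<^sup>+" using a e by (meson trancl_into_trancl2)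
        moreover have "(x, w) \<in> E\<inverse>" using e by simp
        ultimately show ?thesis using 1 by simp
      qed simp
      have "(\<Sum>x\<in>UNIV. \<Lambda> $ w $ x * N $ x $ u) = 0" by (rule sum.neutral) (use z in blast)
      then show "N $ w $ u = 0" using N_rec[of w u] a by simp
    qed
  qed
  then show "N $ w $ u \<noteq> 0 \<Longrightarrow> w = u \<or> (w, u) \<in> E\<^sup>+" by blast
qed

lemma S_entry: "S $ u $ v = (\<Sum>w\<in>UNIV. N $ w $ u * \<omega> w * N $ w $ v)"
proof -
  have "S $ u $ v = (\<Sum>k\<in>UNIV. (\<Sum>w\<in>UNIV. N $ w $ u * (if w = k then \<omega> w else 0)) * N $ k $ v)"
    unfolding S_def phi_def N_def[symmetric] L_def[symmetric]
    by (simp add: matrix_matrix_mult_def Defs.diag_mat_def transpose_def)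
  also have "\<dots> = (\<Sum>k\<in>UNIV. N $ k $ u * \<omega> k * N $ k $ v)"
  proof (rule sum.cong[OF refl])
    fix k
    have "(\<Sum>w\<in>UNIV. N $ w $ u * (if w = k then \<omega> w else 0)) = (\<Sum>w\<in>UNIV. (N $ w $ u * \<omega> w) * (if w = k then 1 else 0))"
      by (rule sum.cong) auto
    then show "(\<Sum>w\<in>UNIV. N $ w $ u * (if w = k then \<omega> w else 0)) * N $ k $ v = N $ k $ u * \<omega> k * N $ k $ v"
      using delta_r[of "\<lambda>w. N $ w $ u * \<omega> w" k] by simp
  qed
  finally show ?thesis .
qed

lemma F4: "(\<Sum>v\<in>UNIV. L $ v $ w * S $ v $ u) = \<omega> w * N $ w $ u"
proof -
  have "(\<Sum>v\<in>UNIV. L $ v $ w * S $ v $ u) = (\<Sum>v\<in>UNIV. \<Sum>x\<in>UNIV. (N $ x $ v * L $ v $ w) * (\<omega> x * N $ x $ u))"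
    by (simp add: S_entry sum_distrib_left mult_ac)
  also have "\<dots> = (\<Sum>x\<in>UNIV. \<Sum>v\<in>UNIV. (N $ x $ v * L $ v $ w) * (\<omega> x * N $ x $ u))"
    by (rule sum.swap)
  also have "\<dots> = (\<Sum>x\<in>UNIV. (\<Sum>v\<in>UNIV. N $ x $ v * L $ v $ w) * (\<omega> x * N $ x $ u))"
    by (simp add: sum_distrib_right)
  also have "\<dots> = (\<Sum>x\<in>UNIV. (if x = w then 1 else 0) * (\<omega> x * N $ x $ u))"
    by (simp add: F2)
  also have "\<dots> = \<omega> w * N $ w $ u"
    using delta_l[of w "\<lambda>x. \<omega> x * N $ x $ u"] by (simp add: eq_commute[of _ w])
  finally show ?thesis .
qed

lemma posdef: "(\<Sum>u\<in>UNIV. \<Sum>v\<in>UNIV. x u * S $ u $ v * x v) = 0 \<Longrightarrow> x c = 0"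
proof -
  assume H: "(\<Sum>u\<in>UNIV. \<Sum>v\<in>UNIV. x u * S $ u $ v * x v) = 0"
  define z where "z w = (\<Sum>u\<in>UNIV. N $ w $ u * x u)" for w
  have "(\<Sum>u\<in>UNIV. \<Sum>v\<in>UNIV. x u * S $ u $ v * x v) = (\<Sum>u\<in>UNIV. \<Sum>v\<in>UNIV. \<Sum>w\<in>UNIV. \<omega> w * ((N $ w $ u * x u) * (N $ w $ v * x v)))"
    by (simp add: S_entry sum_distrib_left sum_distrib_right mult_ac)
  also have "\<dots> = (\<Sum>u\<in>UNIV. \<Sum>w\<in>UNIV. \<Sum>v\<in>UNIV. \<omega> w * ((N $ w $ u * x u) * (N $ w $ v * x v)))"
    by (rule sum.cong[OF refl], rule sum.swap)
  also have "\<dots> = (\<Sum>w\<in>UNIV. \<Sum>u\<in>UNIV. \<Sum>v\<in>UNIV. \<omega> w * ((N $ w $ u * x u) * (N $ w $ v * x v)))"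
    by (rule sum.swap)
  also have "\<dots> = (\<Sum>w\<in>UNIV. \<omega> w * (z w * z w))"
  proof (rule sum.cong[OF refl])
    fix w
    have "z w * z w = (\<Sum>u\<in>UNIV. \<Sum>v\<in>UNIV. (N $ w $ u * x u) * (N $ w $ v * x v))"
      unfolding z_def by (rule sum_product)
    then show "(\<Sum>u\<in>UNIV. \<Sum>v\<in>UNIV. \<omega> w * ((N $ w $ u * x u) * (N $ w $ v * x v))) = \<omega> w * (z w * z w)"
      by (simp add: sum_distrib_left)
  qed
  finally have "(\<Sum>w\<in>UNIV. \<omega> w * (z w * z w)) = 0" using H by simp
  moreover have "\<And>w. 0 \<le> \<omega> w * (z w * z w)" using pos by (simp add: less_imp_le)
  ultimately have "\<forall>w\<in>UNIV. \<omega> w * (z w * z w) = 0"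
    using sum_nonneg_eq_0_iff[of UNIV "\<lambda>w. \<omega> w * (z w * z w)"] by simp
  then have zz: "z w = 0" for w using pos[of w] by (metis UNIV_I less_irrefl mult_eq_0_iff)
  have "(\<Sum>w\<in>UNIV. L $ c $ w * z w) = (\<Sum>w\<in>UNIV. \<Sum>u\<in>UNIV. L $ c $ w * N $ w $ u * x u)"
    unfolding z_def by (simp add: sum_distrib_left mult_ac)
  also have "\<dots> = (\<Sum>u\<in>UNIV. \<Sum>w\<in>UNIV. L $ c $ w * N $ w $ u * x u)" by (rule sum.swap)
  also have "\<dots> = (\<Sum>u\<in>UNIV. (\<Sum>w\<in>UNIV. L $ c $ w * N $ w $ u) * x u)" by (simp add: sum_distrib_right)
  also have "\<dots> = x c" using delta_l[of c x] by (simp add: F1)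
  finally show "x c = 0" using zz by simp
qed

end

section \<open>Underdetermined homogeneous systems\<close>

lemma kernel_exists:
  fixes K :: "'n::finite \<Rightarrow> 'n \<Rightarrow> real" and C :: "'n set"
  assumes iC: "i \<in> C"
  shows "\<exists>\<alpha>. (\<forall>c. c \<notin> C \<longrightarrow> \<alpha> c = 0) \<and> (\<exists>c\<in>C. \<alpha> c \<noteq> 0) \<and>
            (\<forall>v\<in>C - {i}. (\<Sum>c\<in>C. \<alpha> c * K v c) = 0)"
proof (rule ccontr)
  assume contra: "\<not> ?thesis"
  define U where "U = {x :: real^'n. \<forall>k. k \<notin> C \<longrightarrow> x $ k = 0}"
  define U' where "U' = {x :: real^'n. \<forall>k. k \<notin> C - {i} \<longrightarrow> x $ k = 0}"
  define M :: "real^'n^'n" where "M = (\<chi> v c. if v \<in> C - {i} \<and> c \<in> C then K v c else 0)"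
  have Mx: "(M *v x) $ v = (if v \<in> C - {i} then (\<Sum>c\<in>C. x $ c * K v c) else 0)" if "x \<in> U" for x v
  proof -
    have "(M *v x) $ v = (\<Sum>c\<in>UNIV. M $ v $ c * x $ c)" by (simp add: matrix_vector_mult_def)
    also have "\<dots> = (\<Sum>c\<in>UNIV. if c \<in> C then (if v \<in> C - {i} then x $ c * K v c else 0) else 0)"
      by (rule sum.cong) (auto simp: M_def)
    also have "\<dots> = (\<Sum>c\<in>C. if v \<in> C - {i} then x $ c * K v c else 0)"
      by (simp add: sum.If_cases)
    finally show ?thesis by (cases "v \<in> C - {i}") auto
  qed
  have ker: "x = 0" if "x \<in> U" "M *v x = 0" for x
  proof (rule ccontr)
    assume nz: "x \<noteq> 0"
    define \<alpha> where "\<alpha> c = x $ c" for c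
    have "\<forall>c. c \<notin> C \<longrightarrow> \<alpha> c = 0" using that(1) by (simp add: U_def \<alpha>_def)
    moreover have "\<exists>c\<in>C. \<alpha> c \<noteq> 0"
    proof (rule ccontr)
      assume "\<not> (\<exists>c\<in>C. \<alpha> c \<noteq> 0)"
      then have "x $ k = 0" for k using that(1) by (cases "k \<in> C") (auto simp: U_def \<alpha>_def)
      then have "x = 0" by (simp add: Finite_Cartesian_Product.vec_eq_iff)
      then show False using nz by simp
    qed
    moreover have "\<forall>v\<in>C - {i}. (\<Sum>c\<in>C. \<alpha> c * K v c) = 0"
    proof
      fix v assume v: "v \<in> C - {i}"
      have "(M *v x) $ v = 0" using that(2) by simp
      then show "(\<Sum>c\<in>C. \<alpha> c * K v c) = 0" using Mx[OF that(1), of v] v by (simp add: \<alpha>_def)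
    qed
    ultimately show False using contra by blast
  qed
  have subU: "vec.subspace U" unfolding vec.subspace_def U_def by auto
  have inj: "inj_on ((*v) M) (vec.span U)"
    unfolding vec.span_eq_iff[THEN iffD2, OF subU]
  proof (rule inj_onI)
    fix x y assume xy: "x \<in> U" "y \<in> U" "M *v x = M *v y"
    have "x - y \<in> U" using xy(1,2) by (simp add: U_def)
    moreover have "M *v (x - y) = 0" using xy(3) by (simp add: matrix_vector_mult_diff_distrib)
    ultimately have "x - y = 0" using ker by blast
    then show "x = y" by simp
  qed
  have d1: "vec.dim ((*v) M ` U) = vec.dim U"
    by (rule vec.dim_image_eq[OF matrix_vector_mul_linear_gen inj])
  have img: "(*v) M ` U \<subseteq> U'" using Mx by (auto simp: U'_def)
  have "vec.dim U = card C" unfolding U_def by (rule dim_substandard_cart)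
  moreover have "vec.dim U' = card (C - {i})" unfolding U'_def by (rule dim_substandard_cart)
  moreover have "vec.dim ((*v) M ` U) \<le> vec.dim U'" using img by (rule vec.dim_subset)
  moreover have "card (C - {i}) < card C" using iC by (intro card_Diff1_less) simp_all
  ultimately show False using d1 by simp
qed

context Mdl begin

lemma iW: "i \<in> W" unfolding Wset_def by blast
lemma AW: "a \<in> A \<Longrightarrow> a \<in> W" unfolding Wset_def by blast
lemma parW: "(u, j) \<in> E \<Longrightarrow> u \<in> W" unfolding Wset_def by blast
lemma iC: "i \<in> comp E W A i" using iW i_notin by (rule comp.base)

lemma L_nz: "L $ a $ b \<noteq> 0 \<Longrightarrow> a = b \<or> (a, b) \<in> E"
proof (rule ccontr)
  assume a: "L $ a $ b \<noteq> 0" "\<not> (a = b \<or> (a, b) \<in> E)"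
  then have "\<Lambda> $ a $ b = 0" using zero by blast
  then have "L $ a $ b = 0" using a(2) by (simp add: L_entry)
  then show False using a(1) by simp
qed

definition "C = comp E W A i"
definition "K v c = (\<Sum>w\<in>W. L $ v $ w * L $ c $ w / \<omega> w)"

lemma CW: "c \<in> C \<Longrightarrow> c \<in> W \<and> c \<notin> A" unfolding C_def by (rule comp_sub)

end



context Mdl begin

definition "hh \<alpha> w = (\<Sum>c\<in>UNIV. L $ c $ w * \<alpha> c)"
definition "gg \<alpha> w = (if w \<in> W then hh \<alpha> w / \<omega> w else 0)"
definition "yy \<alpha> v = (\<Sum>w\<in>UNIV. L $ v $ w * gg \<alpha> w)"
definition "GG \<alpha> u = (\<Sum>w\<in>UNIV. gg \<alpha> w * (\<omega> w * N $ w $ u))"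

lemma Y2: "(\<Sum>v\<in>UNIV. yy \<alpha> v * S $ v $ u) = GG \<alpha> u"
proof -
  have "(\<Sum>v\<in>UNIV. yy \<alpha> v * S $ v $ u) = (\<Sum>v\<in>UNIV. \<Sum>w\<in>UNIV. gg \<alpha> w * (L $ v $ w * S $ v $ u))"
    unfolding yy_def by (simp add: sum_distrib_right sum_distrib_left mult_ac)
  also have "\<dots> = (\<Sum>w\<in>UNIV. \<Sum>v\<in>UNIV. gg \<alpha> w * (L $ v $ w * S $ v $ u))" by (rule sum.swap)
  also have "\<dots> = (\<Sum>w\<in>UNIV. gg \<alpha> w * (\<Sum>v\<in>UNIV. L $ v $ w * S $ v $ u))" by (simp add: sum_distrib_left)
  also have "\<dots> = GG \<alpha> u" unfolding GG_def by (simp add: F4)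
  finally show ?thesis .
qed

lemma Y3: assumes uW: "u \<in> W" shows "GG \<alpha> u = \<alpha> u"
proof -
  have pw: "gg \<alpha> w * (\<omega> w * N $ w $ u) = hh \<alpha> w * N $ w $ u" for w
  proof (cases "w \<in> W")
    case True
    have "\<omega> w \<noteq> 0" using pos[of w] by simp
    then show ?thesis using True by (simp add: gg_def)
  next
    case False
    have "N $ w $ u = 0"
    proof (rule ccontr)
      assume "N $ w $ u \<noteq> 0"
      then have "w = u \<or> (w, u) \<in> E\<^sup>+" by (rule N_supp)
      then have "w \<in> W"
      proof
        assume "(w, u) \<in> E\<^sup>+" then show "w \<in> W" using uW by (rule W_anc_trancl)
      qed (use uW in simp)
      then show False using False by simp
    qed
    then show ?thesis using False by (simp add: gg_def)
  qed
  have "GG \<alpha> u = (\<Sum>w\<in>UNIV. hh \<alpha> w * N $ w $ u)" unfolding GG_def by (rule sum.cong[OF refl]) (rule pw)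
  also have "\<dots> = (\<Sum>w\<in>UNIV. \<Sum>c\<in>UNIV. \<alpha> c * (L $ c $ w * N $ w $ u))"
    unfolding hh_def by (simp add: sum_distrib_right sum_distrib_left mult_ac)
  also have "\<dots> = (\<Sum>c\<in>UNIV. \<Sum>w\<in>UNIV. \<alpha> c * (L $ c $ w * N $ w $ u))" by (rule sum.swap)
  also have "\<dots> = (\<Sum>c\<in>UNIV. \<alpha> c * (\<Sum>w\<in>UNIV. L $ c $ w * N $ w $ u))" by (simp add: sum_distrib_left)
  also have "\<dots> = (\<Sum>c\<in>UNIV. \<alpha> c * (if c = u then 1 else 0))" by (simp add: F1)
  also have "\<dots> = \<alpha> u" by (rule delta_r)
  finally show ?thesis .
qed

end

context Mdl begin

lemma GA: "a \<in> A \<Longrightarrow> (\<And>c. c \<notin> C \<Longrightarrow> \<alpha> c = 0) \<Longrightarrow> GG \<alpha> a = 0"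
proof -
  assume a: "a \<in> A" and al: "\<And>c. c \<notin> C \<Longrightarrow> \<alpha> c = 0"
  have "a \<notin> C" using CW a by blast
  then show ?thesis using Y3[OF AW[OF a]] al by simp
qed

lemma Gj:
  assumes dsep: "d_separates V' F A i j" and al: "\<And>c. c \<notin> C \<Longrightarrow> \<alpha> c = 0"
  shows "GG \<alpha> j = \<Lambda> $ i $ j * \<alpha> i"
proof -
  have pw: "gg \<alpha> w * (\<omega> w * N $ w $ j) = gg \<alpha> w * (\<omega> w * (\<Sum>x\<in>UNIV. N $ w $ x * \<Lambda> $ x $ j))" for w
  proof (cases "w \<in> W")
    case True
    then have "w \<noteq> j" using W_sub[OF True] by simp
    then show ?thesis using N_rec2[of w j] by simp
  qed (simp add: gg_def)
  have "GG \<alpha> j = (\<Sum>w\<in>UNIV. gg \<alpha> w * (\<omega> w * (\<Sum>x\<in>UNIV. N $ w $ x * \<Lambda> $ x $ j)))"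
    unfolding GG_def by (rule sum.cong[OF refl]) (rule pw)
  also have "\<dots> = (\<Sum>w\<in>UNIV. \<Sum>x\<in>UNIV. \<Lambda> $ x $ j * (gg \<alpha> w * (\<omega> w * N $ w $ x)))"
    by (simp add: sum_distrib_left mult_ac)
  also have "\<dots> = (\<Sum>x\<in>UNIV. \<Sum>w\<in>UNIV. \<Lambda> $ x $ j * (gg \<alpha> w * (\<omega> w * N $ w $ x)))" by (rule sum.swap)
  also have "\<dots> = (\<Sum>x\<in>UNIV. \<Lambda> $ x $ j * GG \<alpha> x)" unfolding GG_def by (simp add: sum_distrib_left)
  also have "\<dots> = (\<Sum>x\<in>UNIV. if x = i then \<Lambda> $ i $ j * \<alpha> i else 0)"
  proof (rule sum.cong[OF refl])
    fix x
    show "\<Lambda> $ x $ j * GG \<alpha> x = (if x = i then \<Lambda> $ i $ j * \<alpha> i else 0)"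
    proof (cases "\<Lambda> $ x $ j = 0")
      case True then show ?thesis by auto
    next
      case False
      then have e: "(x, j) \<in> E" by (rule Lam_nz)
      then have xW: "x \<in> W" by (rule parW)
      show ?thesis
      proof (cases "x = i")
        case True then show ?thesis using Y3[OF iW] by simp
      next
        case False
        have "x \<notin> C"
        proof
          assume "x \<in> C"
          then have "x \<in> comp E W A i" unfolding C_def .
          then show False using P3[OF dsep _ e False] by simp
        qed
        then show ?thesis using Y3[OF xW] al False by simp
      qed
    qed
  qed
  also have "\<dots> = \<Lambda> $ i $ j * \<alpha> i" by simp
  finally show ?thesis .
qed

lemma Y1out: "v \<notin> W \<Longrightarrow> yy \<alpha> v = 0"
proof -
  assume nW: "v \<notin> W"
  have "L $ v $ w * gg \<alpha> w = 0" for w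
  proof (cases "w \<in> W")
    case True
    have "L $ v $ w = 0"
    proof (rule ccontr)
      assume "L $ v $ w \<noteq> 0"
      then have "v = w \<or> (v, w) \<in> E" by (rule L_nz)
      then have "v \<in> W"
      proof
        assume "(v, w) \<in> E" then show "v \<in> W" using True by (rule W_anc)
      qed (use True in simp)
      then show False using nW by simp
    qed
    then show ?thesis by simp
  qed (simp add: gg_def)
  then show ?thesis unfolding yy_def by (intro sum.neutral) simp
qed

lemma Y1in: assumes vW: "v \<in> W" and al: "\<And>c. c \<notin> C \<Longrightarrow> \<alpha> c = 0"
  shows "yy \<alpha> v = (\<Sum>c\<in>C. \<alpha> c * K v c)"
proof -
  have hC: "hh \<alpha> w = (\<Sum>c\<in>C. L $ c $ w * \<alpha> c)" for w
    unfolding hh_def using al by (intro sum.mono_neutral_right) auto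
  have "yy \<alpha> v = (\<Sum>w\<in>UNIV. if w \<in> W then L $ v $ w * (hh \<alpha> w / \<omega> w) else 0)"
    unfolding yy_def gg_def by (rule sum.cong) auto
  also have "\<dots> = (\<Sum>w\<in>W. L $ v $ w * (hh \<alpha> w / \<omega> w))"
    by (simp add: sum.If_cases)
  also have "\<dots> = (\<Sum>w\<in>W. \<Sum>c\<in>C. \<alpha> c * (L $ v $ w * L $ c $ w / \<omega> w))"
    unfolding hC by (simp add: sum_distrib_left sum_divide_distrib mult_ac)
  also have "\<dots> = (\<Sum>c\<in>C. \<Sum>w\<in>W. \<alpha> c * (L $ v $ w * L $ c $ w / \<omega> w))" by (rule sum.swap)
  also have "\<dots> = (\<Sum>c\<in>C. \<alpha> c * K v c)" unfolding K_def by (simp add: sum_distrib_left)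
  finally show ?thesis .
qed

lemma Kzero: assumes vW: "v \<in> W" "v \<notin> A" "v \<notin> C" and cC: "c \<in> C" shows "K v c = 0"
proof -
  have "L $ v $ w * L $ c $ w / \<omega> w = 0" if wW: "w \<in> W" for w
  proof (rule ccontr)
    assume "L $ v $ w * L $ c $ w / \<omega> w \<noteq> 0"
    then have n1: "L $ v $ w \<noteq> 0" and n2: "L $ c $ w \<noteq> 0" by auto
    have vc: "v \<noteq> c" using vW(3) cC by blast
    have d1: "v = w \<or> (v, w) \<in> E" using n1 by (rule L_nz)
    have d2: "c = w \<or> (c, w) \<in> E" using n2 by (rule L_nz)
    have "(c, v) \<in> E \<or> (v, c) \<in> E \<or> (\<exists>w\<in>W. (c, w) \<in> E \<and> (v, w) \<in> E)"
    proof (cases "v = w")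
      case True then show ?thesis using d2 vc by auto
    next
      case False
      then have vw: "(v, w) \<in> E" using d1 by simp
      show ?thesis
      proof (cases "c = w")
        case True then show ?thesis using vw by simp
      next
        case False then show ?thesis using d2 vw wW by auto
      qed
    qed
    then have "madj E W c v" unfolding madj_def using CW[OF cC] vW(1) vc by auto
    then have md: "madj E W c v" .
    have cc: "c \<in> comp E W A i" using cC unfolding C_def .
    have "v \<in> comp E W A i" using cc vW(1) vW(2) md by (rule comp.step)
    then show False using vW(3) unfolding C_def by simp
  qed
  then show ?thesis unfolding K_def by (intro sum.neutral) blast
qed

end

context Mdl begin

lemma ykey:
  assumes dsep: "d_separates V' F A i j"
  shows "\<exists>y. (\<forall>v. v \<notin> insert i A \<longrightarrow> y v = 0) \<and> (\<exists>v. y v \<noteq> 0) \<and>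
    (\<forall>a\<in>A. (\<Sum>v\<in>UNIV. y v * S $ v $ a) = 0) \<and>
    (\<Sum>v\<in>UNIV. y v * S $ v $ j) = \<Lambda> $ i $ j * (\<Sum>v\<in>UNIV. y v * S $ v $ i)"
proof -
  have iCC: "i \<in> C" unfolding C_def by (rule iC)
  obtain \<alpha> where al: "\<forall>c. c \<notin> C \<longrightarrow> \<alpha> c = 0" "\<exists>c\<in>C. \<alpha> c \<noteq> 0"
    "\<forall>v\<in>C - {i}. (\<Sum>c\<in>C. \<alpha> c * K v c) = 0"
    using kernel_exists[of i C K, OF iCC] by blast
  have al1: "\<And>c. c \<notin> C \<Longrightarrow> \<alpha> c = 0" using al(1) by blast
  have Y1: "yy \<alpha> v = 0" if v: "v \<notin> insert i A" for v
  proof (cases "v \<in> W")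
    case False then show ?thesis by (rule Y1out)
  next
    case True
    have e: "yy \<alpha> v = (\<Sum>c\<in>C. \<alpha> c * K v c)" using True al1 by (rule Y1in)
    show ?thesis
    proof (cases "v \<in> C")
      case True then show ?thesis using e al(3) v by simp
    next
      case False
      have "K v c = 0" if "c \<in> C" for c using \<open>v \<in> W\<close> _ False that
      proof (rule Kzero)
        show "v \<notin> A" using v by simp
      qed
      then show ?thesis using e by simp
    qed
  qed
  have Y5: "\<exists>v. yy \<alpha> v \<noteq> 0"
  proof (rule ccontr)
    assume "\<not> ?thesis"
    then have "yy \<alpha> v = 0" for v by simp
    then have G0: "GG \<alpha> u = 0" for u using Y2[of \<alpha> u] by simp
    have "\<alpha> c = 0" if "c \<in> C" for c
    proof -
      have "c \<in> W" using CW[OF that] by simp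
      then show ?thesis using Y3[of c \<alpha>] G0[of c] by simp
    qed
    then show False using al(2) by blast
  qed
  have "\<forall>a\<in>A. (\<Sum>v\<in>UNIV. yy \<alpha> v * S $ v $ a) = 0"
    using GA[OF _ al1] Y2 by simp
  moreover have "(\<Sum>v\<in>UNIV. yy \<alpha> v * S $ v $ j) = \<Lambda> $ i $ j * (\<Sum>v\<in>UNIV. yy \<alpha> v * S $ v $ i)"
    using Gj[OF dsep al1] Y3[OF iW, of \<alpha>] Y2 by simp
  ultimately show ?thesis using Y1 Y5 by (intro exI[of _ "yy \<alpha>"]) blast
qed

end

lemma dsub_det: "det_sub M rs cs =
  Determinant.det (Matrix.mat (length rs) (length rs) (\<lambda>(a, b). M $ (rs ! a) $ (cs ! b)))"
  unfolding det_sub_def Determinant.det_def by (simp add: atLeast0LessThan)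

lemma mv_index: "Mm \<in> carrier_mat n n \<Longrightarrow> a < n \<Longrightarrow>
  Matrix.vec_index (Mm *\<^sub>v Matrix.vec n z) a = (\<Sum>b<n. Mm $$ (a, b) * z b)"
  by (simp add: Matrix.scalar_prod_def atLeast0LessThan)

lemma det_zero_left_kernel:
  fixes Dm :: "real Matrix.mat"
  assumes D: "Dm \<in> carrier_mat n n"
    and ker: "\<And>b. b < n \<Longrightarrow> (\<Sum>a<n. y a * Dm $$ (a, b)) = 0"
    and nz: "a0 < n" "y a0 \<noteq> 0"
  shows "Determinant.det Dm = 0"
proof -
  have DT: "Dm\<^sup>T \<in> carrier_mat n n" using D by simp
  have e: "Dm\<^sup>T *\<^sub>v Matrix.vec n y = 0\<^sub>v n"
  proof (rule eq_vecI)
    fix b assume b: "b < dim_vec (0\<^sub>v n :: real Matrix.vec)"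
    then have bn: "b < n" by simp
    have "Matrix.vec_index (Dm\<^sup>T *\<^sub>v Matrix.vec n y) b = (\<Sum>a<n. Dm\<^sup>T $$ (b, a) * y a)"
      using mv_index[OF DT bn] .
    also have "\<dots> = (\<Sum>a<n. y a * Dm $$ (a, b))"
    proof (rule sum.cong[OF refl])
      fix a assume "a \<in> {..<n}"
      then have "a < n" by simp
      then show "Dm\<^sup>T $$ (b, a) * y a = y a * Dm $$ (a, b)" using D bn by simp
    qed
    also have "\<dots> = 0" using ker[OF bn] .
    finally show "Matrix.vec_index (Dm\<^sup>T *\<^sub>v Matrix.vec n y) b = Matrix.vec_index (0\<^sub>v n) b"
      using bn by simp
  next
    show "dim_vec (Dm\<^sup>T *\<^sub>v Matrix.vec n y) = dim_vec (0\<^sub>v n :: real Matrix.vec)" using D by simp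
  qed
  have ne: "Matrix.vec n y \<noteq> 0\<^sub>v n"
  proof
    assume "Matrix.vec n y = 0\<^sub>v n"
    then have "Matrix.vec_index (Matrix.vec n y) a0 = Matrix.vec_index (0\<^sub>v n) a0" by simp
    then show False using nz by simp
  qed
  have c: "Matrix.vec n y \<in> carrier_vec n" by simp
  have "Determinant.det Dm\<^sup>T = 0"
    by (rule det_0_iff_vec_prod_zero[OF DT, THEN iffD2], rule exI[of _ "Matrix.vec n y"]) (use e ne c in simp)
  then show ?thesis using det_transpose[OF D] by simp
qed

lemma det_nonzero_inj:
  fixes Mm :: "real Matrix.mat"
  assumes M: "Mm \<in> carrier_mat n n"
    and inj: "\<And>z b. (\<And>a. a < n \<Longrightarrow> (\<Sum>b<n. Mm $$ (a, b) * z b) = 0) \<Longrightarrow> b < n \<Longrightarrow> z b = 0"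
  shows "Determinant.det Mm \<noteq> 0"
proof
  assume "Determinant.det Mm = 0"
  then have "\<exists>v. v \<in> carrier_vec n \<and> v \<noteq> 0\<^sub>v n \<and> Mm *\<^sub>v v = 0\<^sub>v n"
    by (rule det_0_iff_vec_prod_zero[OF M, THEN iffD1])
  then obtain v where v: "v \<in> carrier_vec n" "v \<noteq> 0\<^sub>v n" "Mm *\<^sub>v v = 0\<^sub>v n" by blast
  define z where "z b = Matrix.vec_index v b" for b
  have vz: "v = Matrix.vec n z"
  proof (rule eq_vecI)
    fix b assume "b < dim_vec (Matrix.vec n z)"
    then show "Matrix.vec_index v b = Matrix.vec_index (Matrix.vec n z) b" by (simp add: z_def)
  qed (use v(1) in simp)
  have zz: "(\<Sum>b<n. Mm $$ (a, b) * z b) = 0" if "a < n" for a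
  proof -
    have "Matrix.vec_index (Mm *\<^sub>v Matrix.vec n z) a = 0" using v(3) vz that by simp
    then show ?thesis using mv_index[OF M that] by simp
  qed
  have "v = 0\<^sub>v n"
  proof (rule eq_vecI)
    fix b assume "b < dim_vec (0\<^sub>v n :: real Matrix.vec)"
    then have "b < n" by simp
    have "z b = 0" by (rule inj[OF zz \<open>b < n\<close>])
    then show "Matrix.vec_index v b = Matrix.vec_index (0\<^sub>v n) b" using \<open>b < n\<close> by (simp add: z_def)
  qed (use v(1) in simp)
  then show False using v(2) by simp
qed

lemma delete_col0_eq:
  assumes "\<And>a b. a < n \<Longrightarrow> b < n \<Longrightarrow> 0 < b \<Longrightarrow> f (a, b) = g (a, b)"
  shows "mat_delete (Matrix.mat n n f) a 0 = mat_delete (Matrix.mat n n g) a 0"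
  unfolding mat_delete_def using assms by (intro eq_matI) auto

lemma det_col0_linear:
  fixes f g h :: "nat \<times> nat \<Rightarrow> real"
  assumes n: "0 < n"
    and same: "\<And>a b. a < n \<Longrightarrow> b < n \<Longrightarrow> 0 < b \<Longrightarrow> f (a, b) = h (a, b) \<and> g (a, b) = h (a, b)"
    and col: "\<And>a. a < n \<Longrightarrow> h (a, 0) = f (a, 0) - t * g (a, 0)"
  shows "Determinant.det (Matrix.mat n n h) = Determinant.det (Matrix.mat n n f) - t * Determinant.det (Matrix.mat n n g)"
proof -
  have cf: "cofactor (Matrix.mat n n f) a 0 = cofactor (Matrix.mat n n h) a 0"
    "cofactor (Matrix.mat n n g) a 0 = cofactor (Matrix.mat n n h) a 0" for a
    unfolding cofactor_def using delete_col0_eq[of n f h a] delete_col0_eq[of n g h a] same by auto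
  have "Determinant.det (Matrix.mat n n h) = (\<Sum>a<n. h (a, 0) * cofactor (Matrix.mat n n h) a 0)"
    using laplace_expansion_column[of "Matrix.mat n n h" n 0] n by simp
  also have "\<dots> = (\<Sum>a<n. f (a, 0) * cofactor (Matrix.mat n n f) a 0) - t * (\<Sum>a<n. g (a, 0) * cofactor (Matrix.mat n n g) a 0)"
    using col cf by (simp add: sum_distrib_left sum_subtractf left_diff_distrib right_diff_distrib mult_ac)
  also have "\<dots> = Determinant.det (Matrix.mat n n f) - t * Determinant.det (Matrix.mat n n g)"
    using laplace_expansion_column[of "Matrix.mat n n f" n 0] laplace_expansion_column[of "Matrix.mat n n g" n 0] n
    by simp
  finally show ?thesis .
qed

lemma sign_sq: "(of_int (sign p) :: real) * of_int (sign p) = 1"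
  by (simp add: sign_def)

lemma det_sub_perm:
  fixes M :: "real^'n^'n"
  assumes dx: "distinct xs" and dy: "distinct ys" and st: "set xs = set ys"
  shows "det_sub M xs xs = det_sub M ys ys"
proof -
  define n where "n = length xs"
  have ny: "length ys = n" unfolding n_def using distinct_card[OF dx] distinct_card[OF dy] st by simp
  have bx: "bij_betw ((!) xs) {..<n} (set xs)" unfolding n_def by (rule bij_betw_nth[OF dx refl refl])
  then have img: "(!) xs ` {..<n} = set xs" by (simp add: bij_betw_def)
  define p where "p a = (if a < n then inv_into {..<n} ((!) xs) (ys ! a) else a)" for a
  have yin: "ys ! a \<in> (!) xs ` {..<n}" if "a < n" for a using that ny st img by auto
  have pn: "p a < n" if "a < n" for a
    using inv_into_into[OF yin[OF that]] that unfolding p_def by simp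
  have xp: "xs ! p a = ys ! a" if "a < n" for a
    using f_inv_into_f[OF yin[OF that]] that unfolding p_def by simp
  have injp: "inj_on p {..<n}"
  proof (rule inj_onI)
    fix a b assume ab: "a \<in> {..<n}" "b \<in> {..<n}" "p a = p b"
    then have "ys ! a = ys ! b" using xp by (metis lessThan_iff)
    then show "a = b" using dy ab ny by (simp add: nth_eq_iff_index_eq)
  qed
  have "p ` {..<n} = {..<n}" by (rule endo_inj_surj) (use pn injp in auto)
  then have "bij_betw p {..<n} {..<n}" using injp by (simp add: bij_betw_def)
  then have pp: "p permutes {0..<n}"
    by (intro bij_imp_permutes) (auto simp: p_def atLeast0LessThan)
  define X where "X = Matrix.mat n n (\<lambda>(a, b). M $ (xs ! a) $ (xs ! b))"
  define Y where "Y = Matrix.mat n n (\<lambda>(a, b). M $ (ys ! a) $ (ys ! b))"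
  define B where "B = Matrix.mat n n (\<lambda>(a, b). X $$ (p a, b))"
  have XC: "X \<in> carrier_mat n n" unfolding X_def by simp
  have BC: "B \<in> carrier_mat n n" unfolding B_def by simp
  have dB: "Determinant.det B = of_int (sign p) * Determinant.det X"
    unfolding B_def by (rule det_permute_rows[OF XC pp])
  define Z where "Z = Matrix.mat n n (\<lambda>(a, b). B\<^sup>T $$ (p a, b))"
  have dZ: "Determinant.det Z = of_int (sign p) * Determinant.det B\<^sup>T"
    unfolding Z_def by (rule det_permute_rows[OF _ pp]) (use BC in simp)
  have "Z = Y\<^sup>T"
  proof (rule eq_matI)
    fix a b assume ab: "a < dim_row Y\<^sup>T" "b < dim_col Y\<^sup>T"
    then have abn: "a < n" "b < n" unfolding Y_def by auto
    have "Z $$ (a, b) = M $ (xs ! p b) $ (xs ! p a)"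
      unfolding Z_def B_def X_def using abn pn BC by simp
    also have "\<dots> = M $ (ys ! b) $ (ys ! a)" using xp abn by simp
    also have "\<dots> = Y\<^sup>T $$ (a, b)" unfolding Y_def using abn by simp
    finally show "Z $$ (a, b) = Y\<^sup>T $$ (a, b)" .
  qed (auto simp: Z_def Y_def)
  have YC: "Y \<in> carrier_mat n n" unfolding Y_def by simp
  have "Determinant.det Y = Determinant.det Z" using \<open>Z = Y\<^sup>T\<close> det_transpose[OF YC] by simp
  also have "\<dots> = of_int (sign p) * of_int (sign p) * Determinant.det X"
    using dZ dB det_transpose[OF BC] by simp
  also have "\<dots> = Determinant.det X" using sign_sq[of p] by simp
  finally have "Determinant.det Y = Determinant.det X" .
  then show ?thesis unfolding dsub_det X_def Y_def n_def using ny n_def by simp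
qed

lemma sum_list_supp:
  fixes f :: "'n::finite \<Rightarrow> real"
  assumes dI: "distinct I" and z: "\<And>u. u \<notin> set I \<Longrightarrow> f u = 0"
  shows "(\<Sum>u\<in>UNIV. f u) = (\<Sum>a<length I. f (I ! a))"
proof -
  have "(\<Sum>u\<in>UNIV. f u) = (\<Sum>u\<in>set I. f u)"
    by (rule sum.mono_neutral_right) (use z in auto)
  also have "\<dots> = (\<Sum>a<length I. f (I ! a))"
    by (rule sum.reindex_bij_betw[symmetric], rule bij_betw_nth[OF dI refl refl])
  finally show ?thesis .
qed

lemma xsum:
  fixes z :: "nat \<Rightarrow> real" and g :: "'n::finite \<Rightarrow> real"
  shows "(\<Sum>u\<in>UNIV. (\<Sum>a<n. if I ! a = u then z a else 0) * g u) = (\<Sum>a<n. z a * g (I ! a))"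
proof -
  have "(\<Sum>u\<in>UNIV. (\<Sum>a<n. if I ! a = u then z a else 0) * g u) = (\<Sum>u\<in>UNIV. \<Sum>a<n. if I ! a = u then z a * g u else 0)"
  proof (rule sum.cong[OF refl])
    fix u
    show "(\<Sum>a<n. if I ! a = u then z a else 0) * g u = (\<Sum>a<n. if I ! a = u then z a * g u else 0)"
      by (simp add: sum_distrib_right) (rule sum.cong[OF refl], simp)
  qed
  also have "\<dots> = (\<Sum>a<n. \<Sum>u\<in>UNIV. if I ! a = u then z a * g u else 0)" by (rule sum.swap)
  also have "\<dots> = (\<Sum>a<n. z a * g (I ! a))" by simp
  finally show ?thesis .
qed

context Mdl begin

lemma main_eq:
  assumes dsep: "d_separates V' F A i j"
  shows "lambda_cond (phi \<omega> \<Lambda>) i j (A \<union> {i}) = \<Lambda> $ i $ j"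
proof -
  define KL where "KL = sorted_list_of_set A"
  define I where "I = i # KL"
  define n where "n = length I"
  have sKL: "set KL = A" "distinct KL" unfolding KL_def by simp_all
  have dI: "distinct I" unfolding I_def using sKL i_notin by simp
  have sI: "set I = insert i A" unfolding I_def using sKL by simp
  have n0: "0 < n" unfolding n_def I_def by simp
  have Bi: "(A \<union> {i}) - {i} = A" using i_notin by auto
  have den: "det_sub S (sorted_list_of_set (A \<union> {i})) (sorted_list_of_set (A \<union> {i})) = det_sub S I I"
  proof -
    have d1: "distinct (sorted_list_of_set (A \<union> {i}))" by (rule distinct_sorted_list_of_set)
    have s1: "set (sorted_list_of_set (A \<union> {i})) = A \<union> {i}" by (rule set_sorted_list_of_set) simp
    show ?thesis by (rule det_sub_perm[OF d1 dI]) (use s1 sI in auto)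
  qed
  define fi where "fi = (\<lambda>(a, b). S $ (I ! a) $ (I ! b))"
  define fj where "fj = (\<lambda>(a, b). S $ (I ! a) $ ((j # KL) ! b))"
  have num: "det_sub S I (j # KL) = Determinant.det (Matrix.mat n n fj)"
    unfolding dsub_det fj_def n_def ..
  have den2: "det_sub S I I = Determinant.det (Matrix.mat n n fi)"
    unfolding dsub_det fi_def n_def ..
  have lc: "lambda_cond (phi \<omega> \<Lambda>) i j (A \<union> {i}) = Determinant.det (Matrix.mat n n fj) / Determinant.det (Matrix.mat n n fi)"
    unfolding lambda_cond_def S_def[symmetric] Bi using den num den2 by (simp add: I_def KL_def)
  obtain y where y: "\<forall>v. v \<notin> insert i A \<longrightarrow> y v = 0" "\<exists>v. y v \<noteq> 0"
    "\<forall>a\<in>A. (\<Sum>v\<in>UNIV. y v * S $ v $ a) = 0"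
    "(\<Sum>v\<in>UNIV. y v * S $ v $ j) = \<Lambda> $ i $ j * (\<Sum>v\<in>UNIV. y v * S $ v $ i)"
    using ykey[OF dsep] by blast
  define G where "G c = (\<Sum>u\<in>UNIV. y u * S $ u $ c)" for c
  have Gs: "(\<Sum>a<n. y (I ! a) * S $ (I ! a) $ c) = G c" for c
    unfolding G_def n_def by (rule sum_list_supp[symmetric, OF dI]) (use y(1) sI in auto)
  have Ib: "I ! b = (j # KL) ! b" if "0 < b" for b
    using that unfolding I_def by (cases b) auto
  have IbA: "I ! b \<in> A" if "0 < b" "b < n" for b
  proof -
    define b' where "b' = b - 1"
    have b': "b = Suc b'" using that(1) by (simp add: b'_def)
    then have "b' < length KL" using that(2) unfolding n_def I_def by simp
    then show ?thesis using b' sKL(1) unfolding I_def by auto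
  qed
  define h where "h = (\<lambda>(a, b). if b = 0 then fj (a, 0) - \<Lambda> $ i $ j * fi (a, 0) else fi (a, b))"
  have hdet: "Determinant.det (Matrix.mat n n h) =
      Determinant.det (Matrix.mat n n fj) - \<Lambda> $ i $ j * Determinant.det (Matrix.mat n n fi)"
  proof (rule det_col0_linear[OF n0])
    fix a b assume "a < n" "b < n" "0 < b"
    then show "fj (a, b) = h (a, b) \<and> fi (a, b) = h (a, b)"
      unfolding h_def fi_def fj_def using Ib[of b] by simp
  next
    fix a assume "a < n"
    show "h (a, 0) = fj (a, 0) - \<Lambda> $ i $ j * fi (a, 0)" unfolding h_def by simp
  qed
  obtain v0 where v0: "y v0 \<noteq> 0" using y(2) by blast
  then have "v0 \<in> set I" using y(1) sI by blast
  then obtain a0 where a0: "a0 < n" "I ! a0 = v0" unfolding n_def by (auto simp: in_set_conv_nth)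
  have hz: "Determinant.det (Matrix.mat n n h) = 0"
  proof (rule det_zero_left_kernel[of _ n "\<lambda>a. y (I ! a)" a0])
    show "Matrix.mat n n h \<in> carrier_mat n n" by simp
  next
    show "a0 < n" "y (I ! a0) \<noteq> 0" using a0 v0 by simp_all
  next
    fix b assume b: "b < n"
    have "(\<Sum>a<n. y (I ! a) * Matrix.mat n n h $$ (a, b)) = (\<Sum>a<n. y (I ! a) * h (a, b))"
      using b by (intro sum.cong) auto
    also have "\<dots> = 0"
    proof (cases "b = 0")
      case True
      have "(\<Sum>a<n. y (I ! a) * h (a, b)) = (\<Sum>a<n. y (I ! a) * S $ (I ! a) $ j) - \<Lambda> $ i $ j * (\<Sum>a<n. y (I ! a) * S $ (I ! a) $ i)"
        unfolding h_def fi_def fj_def I_def using True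
        by (simp add: sum_subtractf sum_distrib_left right_diff_distrib mult_ac)
      also have "\<dots> = G j - \<Lambda> $ i $ j * G i" using Gs by simp
      also have "\<dots> = 0" using y(4) unfolding G_def by simp
      finally show ?thesis .
    next
      case False
      then have "(\<Sum>a<n. y (I ! a) * h (a, b)) = (\<Sum>a<n. y (I ! a) * S $ (I ! a) $ (I ! b))"
        unfolding h_def fi_def by simp
      also have "\<dots> = G (I ! b)" by (rule Gs)
      also have "\<dots> = 0" using y(3) IbA[of b] False b unfolding G_def by simp
      finally show ?thesis .
    qed
    finally show "(\<Sum>a<n. y (I ! a) * Matrix.mat n n h $$ (a, b)) = 0" .
  qed
  have fj_fi: "Determinant.det (Matrix.mat n n fj) = \<Lambda> $ i $ j * Determinant.det (Matrix.mat n n fi)"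
    using hdet hz by simp
  have nz: "Determinant.det (Matrix.mat n n fi) \<noteq> 0"
  proof (rule det_nonzero_inj)
    show "Matrix.mat n n fi \<in> carrier_mat n n" by simp
  next
    fix z :: "nat \<Rightarrow> real" and b
    assume zk: "\<And>a. a < n \<Longrightarrow> (\<Sum>b<n. Matrix.mat n n fi $$ (a, b) * z b) = 0" and b: "b < n"
    define x where "x u = (\<Sum>a<n. if I ! a = u then z a else 0)" for u
    have zk2: "(\<Sum>c<n. S $ (I ! a) $ (I ! c) * z c) = 0" if "a < n" for a
    proof -
      have "(\<Sum>c<n. S $ (I ! a) $ (I ! c) * z c) = (\<Sum>c<n. Matrix.mat n n fi $$ (a, c) * z c)"
        using that by (intro sum.cong) (auto simp: fi_def)
      then show ?thesis using zk[OF that] by simp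
    qed
    have "(\<Sum>u\<in>UNIV. \<Sum>v\<in>UNIV. x u * S $ u $ v * x v) = (\<Sum>u\<in>UNIV. x u * (\<Sum>v\<in>UNIV. x v * S $ u $ v))"
      by (simp add: sum_distrib_left mult_ac)
    also have "\<dots> = (\<Sum>u\<in>UNIV. x u * (\<Sum>c<n. z c * S $ u $ (I ! c)))"
      unfolding x_def by (subst xsum) (rule refl)
    also have "\<dots> = (\<Sum>a<n. z a * (\<Sum>c<n. z c * S $ (I ! a) $ (I ! c)))"
      unfolding x_def by (rule xsum)
    also have "\<dots> = 0" using zk2 by (simp add: mult_ac)
    finally have q: "(\<Sum>u\<in>UNIV. \<Sum>v\<in>UNIV. x u * S $ u $ v * x v) = 0" .
    have "x (I ! b) = 0" by (rule posdef[OF q])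
    moreover have "x (I ! b) = z b"
    proof -
      have "x (I ! b) = (\<Sum>a<n. if a = b then z a else 0)"
        unfolding x_def
      proof (rule sum.cong[OF refl])
        fix a assume "a \<in> {..<n}"
        then have "(I ! a = I ! b) = (a = b)" using b dI unfolding n_def by (simp add: nth_eq_iff_index_eq)
        then show "(if I ! a = I ! b then z a else 0) = (if a = b then z a else 0)" by simp
      qed
      also have "\<dots> = z b" using b by simp
      finally show ?thesis .
    qed
    ultimately show "z b = 0" by simp
  qed
  show ?thesis using lc fj_fi nz by simp
qed

end

theorem mainTheorem3:
  fixes E :: "('n::{finite,linorder} \<times> 'n) set"
    and i j :: 'n and A :: "'n set"
  assumes dag: "acyclic E"
    and edge: "(i, j) \<in> E"
    and A_sub: "A \<subseteq> Gij_vertices E j"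
    and i_notin: "i \<notin> A" and j_notin: "j \<notin> A"
    and dsep: "d_separates (Gij_vertices E j) (Gij_edges E i j) A i j"
  shows "\<forall>(\<omega> :: 'n \<Rightarrow> real) (\<Lambda> :: ((real, 'n) vec, 'n) vec).
           (\<forall>v. \<omega> v > 0) \<longrightarrow> (\<forall>a b. (a, b) \<notin> E \<longrightarrow> \<Lambda> $ a $ b = 0) \<longrightarrow>
           lambda_cond (phi \<omega> \<Lambda>) i j (A \<union> {i}) = \<Lambda> $ i $ j"
proof (intro allI impI)
  fix \<omega> :: "'n \<Rightarrow> real" and \<Lambda> :: "((real, 'n) vec, 'n) vec"
  assume pos: "\<forall>v. \<omega> v > 0" and zero: "\<forall>a b. (a, b) \<notin> E \<longrightarrow> \<Lambda> $ a $ b = 0"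
  interpret Mdl E i j A \<omega> \<Lambda>
    by unfold_locales (use dag edge A_sub i_notin j_notin pos zero in auto)
  show "lambda_cond (phi \<omega> \<Lambda>) i j (A \<union> {i}) = \<Lambda> $ i $ j" using main_eq[OF dsep] .
qed

end
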